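(* There is a constant $c>0$ such that for every integer $n\ge 1$, with $N=2^n$, the $2N\times 2N$ unitary matrix $C_N^{\mathrm{II}}\oplus (-i)\,S_N^{\mathrm{II}}$ can be realized exactly by a quantum circuit on $n+1$ qubits (plus at most a constant number of ancilla qubits that start and end in $|0\rangle$) consisting of at most $c\,n^2$ elementary gates. In short, $C_N^{\mathrm{II}}$ and $S_N^{\mathrm{II}}$ (and hence their transposes $C_N^{\mathrm{III}}$, $S_N^{\mathrm{III}}$) can be realized with $O(\log^2 N)$ elementary quantum gates.
   Context: Qubit/basis conventions: the state space of $m$ qubits is $\mathbb{C}^{2^m}$ with computational basis $|x\rangle$, $x$ a bit string $b_m\dots b_1$ identified with the integer $\sum_k b_k2^{k-1}$; the most significant bit corresponds to the leftmost tensor factor. Elementary gates: (i) a CNOT between any two qubits, and (ii) any single-qubit gate $I_{2^{m-t}}\otimes U\otimes I_{2^{t-1}}$ with $U\in\mathcal U(2)$ arbitrary. A circuit realizes a unitary $W$ if the product of its gates equals $W$ (ancillas, if any, mapped $|0\rangle\mapsto|0\rangle$). $A\oplus B$ is the block-diagonal matrix with blocks $A,B$. Type II transforms: $C_N^{\mathrm{II}}=\sqrt{2/N}\,[k_j\cos(j(l+\tfrac12)\pi/N)]_{j,l=0,\dots,N-1}$ with $k_0=1/\sqrt2$, $k_j=1$ for $j\ge1$; $S_N^{\mathrm{II}}=\sqrt{2/N}\,[k'_j\sin(j(l+\tfrac12)\pi/N)]_{j=1,\dots,N;\ l=0,\dots,N-1}$ with $k'_N=1/\sqrt2$, $k'_j=1$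 for $j<N$. $C_N^{\mathrm{III}}$, $S_N^{\mathrm{III}}$ are the transposes of $C_N^{\mathrm{II}}$, $S_N^{\mathrm{II}}$. $i=\sqrt{-1}$. *)

theory Defs
  imports Complex_Main "Jordan_Normal_Form.Matrix" "Jordan_Normal_Form.Conjugate"
begin

text \<open>Qubit k (1 <= k <= m) of a basis index x corresponds to bit b_k, of weight 2^(k-1);
  qubit m is the most significant (leftmost tensor factor).\<close>
definition qbit :: "nat \<Rightarrow> nat \<Rightarrow> bool" where
  "qbit x k = odd (x div 2 ^ (k - 1))"

definition qbitval :: "nat \<Rightarrow> nat \<Rightarrow> nat" where
  "qbitval x k = (x div 2 ^ (k - 1)) mod 2"

definition flip_qbit :: "nat \<Rightarrow> nat \<Rightarrow> nat" where
  "flip_qbit x k = (if qbit x k then x - 2 ^ (k - 1) else x + 2 ^ (k - 1))"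

definition cnot_gate :: "nat \<Rightarrow> nat \<Rightarrow> nat \<Rightarrow> complex mat" where
  "cnot_gate m a b = mat (2 ^ m) (2 ^ m)
     (\<lambda>(x, y). if x = (if qbit y a then flip_qbit y b else y) then 1 else 0)"

text \<open>The gate I_{2^(m-t)} \<otimes> U \<otimes> I_{2^(t-1)} on m qubits.\<close>
definition single_gate :: "nat \<Rightarrow> nat \<Rightarrow> complex mat \<Rightarrow> complex mat" where
  "single_gate m t U = mat (2 ^ m) (2 ^ m)
     (\<lambda>(x, y). if (\<forall>k\<in>{1..m} - {t}. qbit x k = qbit y k)
               then U $$ (qbitval x t, qbitval y t) else 0)"

definition adj :: "complex mat \<Rightarrow> complex mat" where
  "adj U = mat (dim_col U) (dim_row U) (\<lambda>(i, j). cnj (U $$ (j, i)))"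

definition unitary2 :: "complex mat \<Rightarrow> bool" where
  "unitary2 U \<longleftrightarrow> U \<in> carrier_mat 2 2 \<and> U * adj U = 1\<^sub>m 2"

definition elementary_gate :: "nat \<Rightarrow> complex mat \<Rightarrow> bool" where
  "elementary_gate m G \<longleftrightarrow>
     (\<exists>a b. a \<in> {1..m} \<and> b \<in> {1..m} \<and> a \<noteq> b \<and> G = cnot_gate m a b) \<or>
     (\<exists>t U. t \<in> {1..m} \<and> unitary2 U \<and> G = single_gate m t U)"

definition circuit_mat :: "nat \<Rightarrow> complex mat list \<Rightarrow> complex mat" where
  "circuit_mat m gs = foldr (*) gs (1\<^sub>m (2 ^ m))"

text \<open>A circuit gs on m + k qubits (the k ancillas being the k least significant qubits)
  realizes the 2^m x 2^m matrix W if it maps |x>|0^k> to (W|x>)|0^k> for all basis states x.\<close>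
definition realizes :: "nat \<Rightarrow> nat \<Rightarrow> complex mat list \<Rightarrow> complex mat \<Rightarrow> bool" where
  "realizes m k gs W \<longleftrightarrow>
     (\<forall>G\<in>set gs. elementary_gate (m + k) G) \<and>
     (\<forall>x < 2 ^ m. \<forall>y < 2 ^ (m + k).
        circuit_mat (m + k) gs $$ (y, x * 2 ^ k) =
          (if y mod 2 ^ k = 0 then W $$ (y div 2 ^ k, x) else 0))"

definition DCT2 :: "nat \<Rightarrow> complex mat" where
  "DCT2 N = mat N N (\<lambda>(j, l). complex_of_real
     (sqrt (2 / real N) * (if j = 0 then 1 / sqrt 2 else 1)
      * cos (real j * (real l + 1 / 2) * pi / real N)))"

text \<open>Row r corresponds to j = r + 1, j = 1..N.\<close>
definition DST2 :: "nat \<Rightarrow> complex mat" where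
  "DST2 N = mat N N (\<lambda>(r, l). complex_of_real
     (sqrt (2 / real N) * (if r + 1 = N then 1 / sqrt 2 else 1)
      * sin (real (r + 1) * (real l + 1 / 2) * pi / real N)))"

definition CS_block :: "nat \<Rightarrow> complex mat" where
  "CS_block N = four_block_mat (DCT2 N) (0\<^sub>m N N) (0\<^sub>m N N) ((- \<i>) \<cdot>\<^sub>m DST2 N)"

end

theory Submission
  imports Defs
begin

definition app :: "nat \<Rightarrow> complex mat \<Rightarrow> (nat \<Rightarrow> complex) \<Rightarrow> nat \<Rightarrow> complex" where
  "app m G v = (\<lambda>y. \<Sum>x<2^m. G $$ (y,x) * v x)"

definition act :: "nat \<Rightarrow> complex mat list \<Rightarrow> (nat \<Rightarrow> complex) \<Rightarrow> nat \<Rightarrow> complex" where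
  "act m gs v = foldr (app m) gs v"

lemma act_Nil[simp]: "act m [] v = v" by (simp add: act_def)
lemma act_Cons[simp]: "act m (G # gs) v = app m G (act m gs v)" by (simp add: act_def)
lemma act_append: "act m (gs @ hs) v = act m gs (act m hs v)" by (simp add: act_def)

lemma circuit_mat_Cons: "circuit_mat m (G # gs) = G * circuit_mat m gs"
  by (simp add: circuit_mat_def)

lemma circuit_carrier:
  "(\<forall>G\<in>set gs. G \<in> carrier_mat (2^m) (2^m)) \<Longrightarrow> circuit_mat m gs \<in> carrier_mat (2^m) (2^m)"
  by (induction gs) (auto simp: circuit_mat_def)

lemma circuit_entry:
  assumes "\<forall>G\<in>set gs. G \<in> carrier_mat (2^m) (2^m)" "y < 2^m" "x < 2^m"
  shows "circuit_mat m gs $$ (y,x) = act m gs (\<lambda>z. if z = x then 1 else 0) y"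
  using assms
proof (induction gs arbitrary: y)
  case Nil
  then show ?case by (simp add: circuit_mat_def)
next
  case (Cons G gs)
  have C: "circuit_mat m gs \<in> carrier_mat (2^m) (2^m)" using Cons.prems circuit_carrier by auto
  have G: "G \<in> carrier_mat (2^m) (2^m)" using Cons.prems by auto
  have "circuit_mat m (G # gs) $$ (y,x) = (\<Sum>z\<in>{0..<2^m}. G $$ (y,z) * circuit_mat m gs $$ (z,x))"
    unfolding circuit_mat_Cons using C G Cons.prems
    by (subst index_mult_mat) (auto simp: scalar_prod_def intro!: sum.cong)
  also have "\<dots> = (\<Sum>z<2^m. G $$ (y,z) * act m gs (\<lambda>z. if z = x then 1 else 0) z)"
    using Cons by (auto intro!: sum.cong simp: atLeast0LessThan)
  finally show ?case by (simp add: app_def)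
qed

lemma app_cong: "(\<And>x. x < 2^m \<Longrightarrow> v x = w x) \<Longrightarrow> app m G v y = app m G w y"
  by (simp add: app_def)

lemma act_cong: "(\<And>x. x < 2^m \<Longrightarrow> v x = w x) \<Longrightarrow> y < 2^m \<Longrightarrow> act m gs v y = act m gs w y"
proof (induction gs arbitrary: y)
  case Nil then show ?case by simp
next
  case (Cons G gs) then show ?case by (simp, intro app_cong) (rule Cons.IH[OF Cons.prems(1)])
qed

lemma qbit_bit: "qbit x k = bit x (k - 1)"
  by (simp add: qbit_def bit_nat_def)

lemma qbitval_eq: "qbitval x k = (if qbit x k then 1 else 0)"
  by (simp add: qbitval_def qbit_def odd_iff_mod_2_eq_one)

lemma less_pow_bit: "(x::nat) < 2^m \<Longrightarrow> bit x n \<Longrightarrow> n < m"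
proof (rule ccontr)
  assume a: "x < 2^m" "bit x n" "\<not> n < m"
  have "(2::nat)^m \<le> 2^n" using a(3) by simp
  then have "x < 2^n" using a(1) by linarith
  then have "x div 2^n = 0" by simp
  then show False using a(2) by (simp add: bit_nat_def)
qed

lemma nat_eq_bits: assumes "(x::nat) < 2^m" "y < 2^m" "\<And>n. n < m \<Longrightarrow> bit x n = bit y n" shows "x = y"
proof (rule bit_eqI)
  fix n show "bit x n = bit y n"
  proof (cases "n < m")
    case True thus ?thesis using assms by simp
  next
    case False thus ?thesis using less_pow_bit assms by blast
  qed
qed

lemma set_bit_less: "(y::nat) < 2^m \<Longrightarrow> n < m \<Longrightarrow> set_bit n y < 2^m"
  by (metis nless_le not_less_iff_gr_or_eq take_bit_nat_eq_self_iff take_bit_set_bit_eq)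

lemma unset_bit_less: "(y::nat) < 2^m \<Longrightarrow> unset_bit n y < 2^m"
  by (smt (verit) of_nat_less_numeral_power_cancel_iff of_nat_unset_bit_eq unset_bit_less_eq)


lemma bits_eq_char:
  assumes "(x::nat) < 2^m" "y < 2^m" "t \<in> {1..m}"
  shows "(\<forall>k\<in>{1..m} - {t}. qbit y k = qbit x k) \<longleftrightarrow> (x = unset_bit (t-1) y \<or> x = set_bit (t-1) y)"
proof
  assume H: "\<forall>k\<in>{1..m} - {t}. qbit y k = qbit x k"
  have Hb: "bit x n = bit y n" if "n < m" "n \<noteq> t - 1" for n
  proof -
    have "Suc n \<in> {1..m} - {t}" using that assms(3) by auto
    then have "qbit y (Suc n) = qbit x (Suc n)" using H by blast
    then show ?thesis by (simp add: qbit_bit)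
  qed
  show "x = unset_bit (t-1) y \<or> x = set_bit (t-1) y"
  proof (cases "bit x (t-1)")
    case True
    have "x = set_bit (t-1) y"
      apply (rule nat_eq_bits[OF assms(1) set_bit_less[OF assms(2)]])
      using assms(3) True Hb by (auto simp: bit_set_bit_iff)
    then show ?thesis by simp
  next
    case False
    have "x = unset_bit (t-1) y"
      apply (rule nat_eq_bits[OF assms(1) unset_bit_less[OF assms(2)]])
      using assms(3) False Hb by (auto simp: bit_unset_bit_iff)
    then show ?thesis by simp
  qed
next
  assume "x = unset_bit (t-1) y \<or> x = set_bit (t-1) y"
  then show "\<forall>k\<in>{1..m} - {t}. qbit y k = qbit x k"
    using assms(3) by (auto simp: qbit_bit bit_unset_bit_iff bit_set_bit_iff)
qed

lemma app_single:
  assumes "t \<in> {1..m}" "y < 2^m"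
  shows "app m (single_gate m t U) v y =
    U $$ (qbitval y t, 0) * v (unset_bit (t-1) y) + U $$ (qbitval y t, 1) * v (set_bit (t-1) y)"
proof -
  let ?u = "unset_bit (t-1) y" and ?s = "set_bit (t-1) y"
  have us: "?u < 2^m" "?s < 2^m" using assms unset_bit_less set_bit_less by auto
  have qu: "qbitval ?u t = 0" "qbitval ?s t = 1"
    by (auto simp: qbitval_eq qbit_bit bit_unset_bit_iff bit_set_bit_iff)
  have ne: "?u \<noteq> ?s" using qu by auto
  have "app m (single_gate m t U) v y = (\<Sum>x<2^m. (if x \<in> {?u, ?s} then U $$ (qbitval y t, qbitval x t) * v x else 0))"
    unfolding app_def single_gate_def
    by (intro sum.cong refl) (use assms bits_eq_char in auto)
  also have "\<dots> = (\<Sum>x\<in>{?u, ?s}. U $$ (qbitval y t, qbitval x t) * v x)"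
    by (subst sum.inter_filter[symmetric]) (use us in \<open>auto intro!: sum.cong\<close>)
  also have "\<dots> = U $$ (qbitval y t, 0) * v ?u + U $$ (qbitval y t, 1) * v ?s"
    using ne qu by simp
  finally show ?thesis .
qed

lemma set_bit_same: "bit (y::nat) n \<Longrightarrow> set_bit n y = y"
  by (rule bit_eqI) (auto simp: bit_set_bit_iff)
lemma unset_bit_same: "\<not> bit (y::nat) n \<Longrightarrow> unset_bit n y = y"
  by (rule bit_eqI) (auto simp: bit_unset_bit_iff)
lemma set_unset: "set_bit n (unset_bit n (y::nat)) = unset_bit n y + 2^n"
  by (simp add: set_bit_eq bit_unset_bit_iff)
lemma set_unset2: "bit (y::nat) n \<Longrightarrow> set_bit n (unset_bit n y) = y"
  by (rule bit_eqI) (auto simp: bit_set_bit_iff bit_unset_bit_iff)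
lemma unset_num: "bit (y::nat) n \<Longrightarrow> unset_bit n y + 2^n = y"
  using set_unset set_unset2 by metis
lemma set_bit_num: "set_bit n (y::nat) = unset_bit n y + 2^n"
proof (cases "bit y n")
  case True then show ?thesis using unset_num set_bit_same by metis
next
  case False then show ?thesis by (simp add: set_bit_eq unset_bit_same)
qed

lemma flip_qbit_eq: "k \<ge> 1 \<Longrightarrow> flip_qbit x k = flip_bit (k-1) x"
proof -
  assume k: "k \<ge> 1"
  show ?thesis
  proof (cases "bit x (k-1)")
    case True
    then have "x - 2^(k-1) = unset_bit (k-1) x" using unset_num[OF True] by simp
    then show ?thesis using True by (simp add: flip_qbit_def qbit_bit flip_bit_eq_if)
  next
    case False
    then show ?thesis by (simp add: flip_qbit_def qbit_bit flip_bit_eq_if set_bit_eq)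
  qed
qed

lemma flip_bit_less: "(y::nat) < 2^m \<Longrightarrow> n < m \<Longrightarrow> flip_bit n y < 2^m"
  by (simp add: flip_bit_eq_if set_bit_less unset_bit_less)

definition mat2 :: "complex \<Rightarrow> complex \<Rightarrow> complex \<Rightarrow> complex \<Rightarrow> complex mat" where
  "mat2 a b c d = mat 2 2 (\<lambda>(i,j). if i = 0 then (if j = 0 then a else b) else (if j = 0 then c else d))"

lemma mat2_idx[simp]: "mat2 a b c d $$ (0,0) = a" "mat2 a b c d $$ (0,1) = b"
  "mat2 a b c d $$ (1,0) = c" "mat2 a b c d $$ (1,1) = d"
  by (auto simp: mat2_def)
lemma mat2_idx'[simp]: "mat2 a b c d $$ (0,Suc 0) = b"
  "mat2 a b c d $$ (Suc 0,0) = c" "mat2 a b c d $$ (Suc 0,Suc 0) = d"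
  by (auto simp: mat2_def)

lemma qbitval_cases: "qbitval y t = (if qbit y t then 1 else 0)" by (rule qbitval_eq)

lemma app_mat2:
  assumes "t \<in> {1..m}" "y < 2^m"
  shows "app m (single_gate m t (mat2 a b c d)) v y =
    (if qbit y t then c * v (unset_bit (t-1) y) + d * v (set_bit (t-1) y)
     else a * v (unset_bit (t-1) y) + b * v (set_bit (t-1) y))"
  using app_single[OF assms] by (simp add: qbitval_eq)

lemma unitary2_mat2:
  assumes "a * cnj a + b * cnj b = 1" "c * cnj c + d * cnj d = 1" "a * cnj c + b * cnj d = 0"
  shows "unitary2 (mat2 a b c d)"
proof -
  have c: "mat2 a b c d \<in> carrier_mat 2 2" by (simp add: mat2_def)
  have "mat2 a b c d * adj (mat2 a b c d) = 1\<^sub>m 2"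
  proof (rule eq_matI)
    fix i j assume ij: "i < dim_row (1\<^sub>m 2 :: complex mat)" "j < dim_col (1\<^sub>m 2 :: complex mat)"
    then have "i < 2" "j < 2" by auto
    then have "i \<in> {0,1}" "j \<in> {0,1}" by auto
    moreover have "(mat2 a b c d * adj (mat2 a b c d)) $$ (i,j) =
       mat2 a b c d $$ (i,0) * cnj (mat2 a b c d $$ (j,0)) + mat2 a b c d $$ (i,1) * cnj (mat2 a b c d $$ (j,1))"
      using \<open>i < 2\<close> \<open>j < 2\<close> c
      by (simp add: adj_def scalar_prod_def mat2_def numeral_2_eq_2 lessThan_Suc atLeast0LessThan)
    moreover have "cnj a * c + cnj b * d = 0" using assms(3)
      by (metis complex_cnj_cnj complex_cnj_mult complex_cnj_add complex_cnj_zero mult.commute)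
    ultimately show "(mat2 a b c d * adj (mat2 a b c d)) $$ (i,j) = 1\<^sub>m 2 $$ (i,j)"
      using assms by (auto simp: mult.commute)
  qed (auto simp: adj_def mat2_def)
  then show ?thesis using c by (simp add: unitary2_def)
qed

definition Xm :: "complex mat" where "Xm = mat2 0 1 1 0"
definition hr :: complex where "hr = complex_of_real (1 / sqrt 2)"
definition Hm :: "complex mat" where "Hm = mat2 hr hr hr (- hr)"
lemma hr_sq: "hr * hr = 1/2"
proof -
  have "(1 / sqrt 2) * (1 / sqrt 2) = (1/2::real)" by (simp add: divide_simps)
  then show ?thesis unfolding hr_def by (metis of_real_mult of_real_divide of_real_1 of_real_numeral)
qed
lemma cnj_hr[simp]: "cnj hr = hr" by (simp add: hr_def)
definition Pm :: "real \<Rightarrow> complex mat" where "Pm th = mat2 1 0 0 (cis th)"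
definition Rym :: "real \<Rightarrow> complex mat" where
  "Rym th = mat2 (complex_of_real (cos (th/2))) (- complex_of_real (sin (th/2))) (complex_of_real (sin (th/2))) (complex_of_real (cos (th/2)))"

lemma unitary_Xm: "unitary2 Xm" unfolding Xm_def by (rule unitary2_mat2) auto
lemma unitary_Hm: "unitary2 Hm" unfolding Hm_def
  by (rule unitary2_mat2) (auto simp: hr_sq)
lemma unitary_Pm: "unitary2 (Pm th)" unfolding Pm_def
  by (rule unitary2_mat2) (auto simp: cis_cnj cis_mult)
lemma unitary_Rym: "unitary2 (Rym th)" unfolding Rym_def
proof (rule unitary2_mat2)
  have e: "cos (th/2) * cos (th/2) + sin (th/2) * sin (th/2) = 1"
    by (simp flip: power2_eq_square)
  then have e': "complex_of_real (cos (th/2)) * complex_of_real (cos (th/2)) + complex_of_real (sin (th/2)) * complex_of_real (sin (th/2)) = 1"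
    by (metis of_real_add of_real_mult of_real_1)
  then show "complex_of_real (cos (th / 2)) * cnj (complex_of_real (cos (th / 2))) +
    (- complex_of_real (sin (th / 2))) * cnj (- complex_of_real (sin (th / 2))) = 1"
    by simp
  show "complex_of_real (sin (th / 2)) * cnj (complex_of_real (sin (th / 2))) +
    complex_of_real (cos (th / 2)) * cnj (complex_of_real (cos (th / 2))) = 1"
    using e' by (simp add: add.commute)
  show "complex_of_real (cos (th / 2)) * cnj (complex_of_real (sin (th / 2))) +
    (- complex_of_real (sin (th / 2))) * cnj (complex_of_real (cos (th / 2))) = 0"
    by (simp add: mult.commute)
qed

lemma app_X:
  assumes "t \<in> {1..m}" "y < 2^m"
  shows "app m (single_gate m t Xm) v y = v (flip_bit (t-1) y)"
  using app_mat2[OF assms] by (simp add: Xm_def flip_bit_eq_if qbit_bit)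

lemma app_P:
  assumes "t \<in> {1..m}" "y < 2^m"
  shows "app m (single_gate m t (Pm th)) v y = (if qbit y t then cis th else 1) * v y"
  using app_mat2[OF assms] by (simp add: Pm_def qbit_bit set_bit_same unset_bit_same)

lemma app_H:
  assumes "t \<in> {1..m}" "y < 2^m"
  shows "app m (single_gate m t Hm) v y =
    hr * (v (unset_bit (t-1) y) + (if qbit y t then -1 else 1) * v (set_bit (t-1) y))"
  using app_mat2[OF assms] by (simp add: Hm_def algebra_simps)

lemma app_Ry:
  assumes "t \<in> {1..m}" "y < 2^m"
  shows "app m (single_gate m t (Rym th)) v y =
    (if qbit y t then complex_of_real (sin (th/2)) * v (unset_bit (t-1) y) + complex_of_real (cos (th/2)) * v (set_bit (t-1) y)
     else complex_of_real (cos (th/2)) * v (unset_bit (t-1) y) - complex_of_real (sin (th/2)) * v (set_bit (t-1) y))"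
  using app_mat2[OF assms] by (simp add: Rym_def)

definition cxf :: "nat \<Rightarrow> nat \<Rightarrow> nat \<Rightarrow> nat" where
  "cxf a b x = (if qbit x a then flip_bit (b-1) x else x)"

lemma cxf_invol: "a \<ge> 1 \<Longrightarrow> b \<ge> 1 \<Longrightarrow> a \<noteq> b \<Longrightarrow> cxf a b (cxf a b x) = x"
  by (auto simp: cxf_def qbit_bit bit_flip_bit_iff flip_bit_eq_if bit_set_bit_iff bit_unset_bit_iff
      set_unset2 set_bit_same unset_bit_same intro!: bit_eqI)

lemma cxf_less: "x < 2^m \<Longrightarrow> b \<in> {1..m} \<Longrightarrow> cxf a b x < 2^m"
  by (auto simp: cxf_def intro!: flip_bit_less)

lemma app_cnot:
  assumes "a \<in> {1..m}" "b \<in> {1..m}" "a \<noteq> b" "y < 2^m"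
  shows "app m (cnot_gate m a b) v y = v (cxf a b y)"
proof -
  have e: "(y = cxf a b x) \<longleftrightarrow> (x = cxf a b y)" for x
    using cxf_invol[of a b] assms by auto
  have "app m (cnot_gate m a b) v y = (\<Sum>x<2^m. (if x = cxf a b y then v x else 0))"
  proof -
    have f: "(if qbit x a then flip_qbit x b else x) = cxf a b x" for x
      using assms(2) by (simp add: cxf_def flip_qbit_eq)
    show ?thesis unfolding app_def cnot_gate_def
      by (intro sum.cong refl) (simp only: f e index_mat lessThan_iff assms(4) case_prod_conv, simp)
  qed
  also have "\<dots> = v (cxf a b y)" using cxf_less[OF assms(4) assms(2)] by simp
  finally show ?thesis .
qed

lemma qbitval_Suc: "qbitval y (Suc j) = (y div 2^j) mod 2" by (simp add: qbitval_def)
lemma qbit_Suc: "qbit y (Suc j) \<longleftrightarrow> (y div 2^j) mod 2 = 1"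
  by (simp add: qbit_def odd_iff_mod_2_eq_one)
lemma qbitval_le1: "qbitval y t \<le> 1" by (simp add: qbitval_def)

lemma decomp_Suc: "(y::nat) = (y div 2^(Suc j)) * 2^(Suc j) + qbitval y (Suc j) * 2^j + y mod 2^j"
proof -
  have "y mod 2^(Suc j) = 2^j * (y div 2^j mod 2) + y mod 2^j"
    by (metis mod_mult2_eq power_Suc2)
  then show ?thesis by (simp add: qbitval_Suc mult.commute) (metis div_mult_mod_eq mult.commute add.assoc)
qed

lemma mod_Suc_split: "(y::nat) mod 2^(Suc j) = qbitval y (Suc j) * 2^j + y mod 2^j"
  by (metis mod_mult2_eq power_Suc2 qbitval_Suc mult.commute)

lemma decomp_parts:
  assumes "b < 2" "(c::nat) < 2^j"
  shows "(A * 2^(Suc j) + b * 2^j + c) div 2^(Suc j) = A"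
    "qbitval (A * 2^(Suc j) + b * 2^j + c) (Suc j) = b"
    "(A * 2^(Suc j) + b * 2^j + c) mod 2^j = c"
    "(A * 2^(Suc j) + b * 2^j + c) mod 2^(Suc j) = b * 2^j + c"
proof -
  have lt: "b * 2^j + c < 2^(Suc j)"
  proof (cases "b = 0")
    case False then have "b = 1" using assms(1) by linarith
    then show ?thesis using assms(2) by simp
  qed (use assms in simp)
  show "(A * 2^(Suc j) + b * 2^j + c) div 2^(Suc j) = A"
    using lt by (simp add: add.assoc)
  show m: "(A * 2^(Suc j) + b * 2^j + c) mod 2^(Suc j) = b * 2^j + c"
    using lt by (simp add: add.assoc)
  have "(A * 2^(Suc j) + b * 2^j + c) div 2^j = 2 * A + b"
  proof -
    have "A * 2^(Suc j) + b * 2^j + c = (2*A + b) * 2^j + c" by (simp add: algebra_simps)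
    then show ?thesis using assms(2) by simp
  qed
  then show "qbitval (A * 2^(Suc j) + b * 2^j + c) (Suc j) = b"
    using assms(1) by (simp add: qbitval_Suc)
  have "A * 2^(Suc j) + b * 2^j + c = (2*A + b) * 2^j + c" by (simp add: algebra_simps)
  then show "(A * 2^(Suc j) + b * 2^j + c) mod 2^j = c" using assms(2) by simp
qed

lemma qbit_val: "qbit y t \<longleftrightarrow> qbitval y t = 1"
  by (simp add: qbitval_eq)

lemma flip_bit_num: "flip_bit j (y::nat) = (if qbitval y (Suc j) = 1 then y - 2^j else y + 2^j)"
proof (cases "bit y j")
  case True
  then show ?thesis using unset_num[OF True]
    by (simp add: flip_bit_eq_if qbitval_eq qbit_bit)
next
  case False
  then show ?thesis by (simp add: flip_bit_eq_if qbitval_eq qbit_bit set_bit_eq)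
qed

lemma unset_bit_num: "unset_bit j (y::nat) = y - qbitval y (Suc j) * 2^j"
proof (cases "bit y j")
  case True
  then show ?thesis using unset_num[OF True]
    by (simp add: qbitval_eq qbit_bit)
next
  case False
  then show ?thesis by (simp add: qbitval_eq qbit_bit unset_bit_same)
qed

lemma set_bit_num': "set_bit j (y::nat) = y - qbitval y (Suc j) * 2^j + 2^j"
  by (simp add: set_bit_num unset_bit_num)

lemma elem_single: "t \<in> {1..m} \<Longrightarrow> unitary2 U \<Longrightarrow> elementary_gate m (single_gate m t U)"
  unfolding elementary_gate_def by blast
lemma elem_cnot: "a \<in> {1..m} \<Longrightarrow> b \<in> {1..m} \<Longrightarrow> a \<noteq> b \<Longrightarrow> elementary_gate m (cnot_gate m a b)"
  unfolding elementary_gate_def by blast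

definition cp :: "nat \<Rightarrow> nat \<Rightarrow> nat \<Rightarrow> real \<Rightarrow> complex mat list" where
  "cp m a b ph = [single_gate m a (Pm (ph/2)), single_gate m b (Pm (ph/2)), cnot_gate m a b,
                  single_gate m b (Pm (- ph/2)), cnot_gate m a b]"

lemma qbit_cxf: "a \<ge> 1 \<Longrightarrow> b \<ge> 1 \<Longrightarrow> a \<noteq> b \<Longrightarrow>
   qbit (cxf a b y) b \<longleftrightarrow> (qbit y b \<noteq> qbit y a)"
  by (auto simp: cxf_def qbit_bit bit_flip_bit_iff)

lemma act_cp:
  assumes "a \<in> {1..m}" "b \<in> {1..m}" "a \<noteq> b" "y < 2^m"
  shows "act m (cp m a b ph) v y = (if qbit y a \<and> qbit y b then cis ph else 1) * v y"
proof -
  have l: "cxf a b y < 2^m" using cxf_less assms by auto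
  have inv: "cxf a b (cxf a b y) = y" using cxf_invol assms by auto
  have q: "qbit (cxf a b y) b \<longleftrightarrow> (qbit y b \<noteq> qbit y a)" using qbit_cxf assms by auto
  have "act m (cp m a b ph) v y =
    (if qbit y a then cis (ph/2) else 1) * ((if qbit y b then cis (ph/2) else 1) *
     ((if qbit (cxf a b y) b then cis (- ph/2) else 1) * v (cxf a b (cxf a b y))))"
    using assms l by (simp add: cp_def app_P app_cnot)
  also have "\<dots> = (if qbit y a \<and> qbit y b then cis ph else 1) * v y"
    using inv q by (auto simp: cis_mult)
  finally show ?thesis .
qed

lemma all_cp: "a \<in> {1..m} \<Longrightarrow> b \<in> {1..m} \<Longrightarrow> a \<noteq> b \<Longrightarrow> \<forall>G\<in>set (cp m a b ph). elementary_gate m G"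
  by (simp add: cp_def elem_single elem_cnot unitary_Pm)

lemma length_cp[simp]: "length (cp m a b ph) = 5" by (simp add: cp_def)

fun pl :: "nat \<Rightarrow> real \<Rightarrow> nat \<Rightarrow> complex mat list" where
  "pl m al 0 = []"
| "pl m al (Suc k) = single_gate m (Suc k) (Pm (al * 2^k)) # pl m al k"

lemma act_pl:
  assumes "k \<le> m" "y < 2^m"
  shows "act m (pl m al k) v y = cis (al * real (y mod 2^k)) * v y"
  using assms(1)
proof (induction k)
  case 0 then show ?case by simp
next
  case (Suc k)
  have "act m (pl m al (Suc k)) v y = (if qbit y (Suc k) then cis (al * 2^k) else 1) * (cis (al * real (y mod 2^k)) * v y)"
    using Suc assms by (simp add: app_P)
  also have "\<dots> = cis (al * real (y mod 2^(Suc k))) * v y"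
  proof (cases "qbit y (Suc k)")
    case True
    then have "real (y mod 2^(Suc k)) = 2^k + real (y mod 2^k)"
      using mod_Suc_split[of y k] by (simp add: qbitval_eq)
    then have "cis (al * real (y mod 2^(Suc k))) = cis (al * 2^k) * cis (al * real (y mod 2^k))"
      by (simp add: distrib_left cis_mult)
    then show ?thesis using True by simp
  next
    case False
    then have "y mod 2^(Suc k) = y mod 2^k"
      using mod_Suc_split[of y k] by (simp add: qbitval_eq)
    then show ?thesis using False by simp
  qed
  finally show ?case .
qed

lemma all_pl: "k \<le> m \<Longrightarrow> \<forall>G\<in>set (pl m al k). elementary_gate m G"
  by (induction k) (simp_all add: elem_single unitary_Pm)

lemma length_pl[simp]: "length (pl m al k) = k" by (induction k) auto

fun cpl :: "nat \<Rightarrow> nat \<Rightarrow> real \<Rightarrow> nat \<Rightarrow> complex mat list" where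
  "cpl m c al 0 = []"
| "cpl m c al (Suc k) = cp m c (Suc k) (al * 2^k) @ cpl m c al k"

lemma act_cpl:
  assumes "k < c" "c \<le> m" "y < 2^m"
  shows "act m (cpl m c al k) v y = (if qbit y c then cis (al * real (y mod 2^k)) else 1) * v y"
  using assms(1)
proof (induction k)
  case 0 then show ?case by simp
next
  case (Suc k)
  have "act m (cpl m c al (Suc k)) v y =
     (if qbit y c \<and> qbit y (Suc k) then cis (al * 2^k) else 1) * ((if qbit y c then cis (al * real (y mod 2^k)) else 1) * v y)"
    using Suc assms by (simp add: act_append act_cp)
  also have "\<dots> = (if qbit y c then cis (al * real (y mod 2^(Suc k))) else 1) * v y"
  proof (cases "qbit y (Suc k)")
    case True
    then have "real (y mod 2^(Suc k)) = 2^k + real (y mod 2^k)"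
      using mod_Suc_split[of y k] by (simp add: qbitval_eq)
    then have "cis (al * real (y mod 2^(Suc k))) = cis (al * 2^k) * cis (al * real (y mod 2^k))"
      by (simp add: distrib_left cis_mult)
    then show ?thesis using True by simp
  next
    case False
    then have "y mod 2^(Suc k) = y mod 2^k"
      using mod_Suc_split[of y k] by (simp add: qbitval_eq)
    then show ?thesis using False by simp
  qed
  finally show ?case .
qed

lemma all_cpl: "k < c \<Longrightarrow> c \<le> m \<Longrightarrow> \<forall>G\<in>set (cpl m c al k). elementary_gate m G"
proof (induction k)
  case 0 then show ?case by simp
next
  case (Suc k) then show ?case using all_cp[of c m "Suc k"] by auto
qed

lemma length_cpl[simp]: "length (cpl m c al k) = 5 * k" by (induction k) auto

definition dec :: "nat \<Rightarrow> nat \<Rightarrow> nat \<Rightarrow> nat \<Rightarrow> nat \<Rightarrow> nat" where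
  "dec i A p q e = A * 2^(Suc (Suc i)) + p * 2^(Suc i) + q * 2^i + e"

lemma dec_q1:
  assumes "p < 2" "q < 2" "e < 2^i"
  shows "qbitval (dec i A p q e) (Suc i) = q"
proof -
  have "dec i A p q e = (2*A + p) * 2^(Suc i) + q * 2^i + e" by (simp add: dec_def algebra_simps)
  then show ?thesis using decomp_parts(2)[OF assms(2,3)] by simp
qed

lemma dec_q2:
  assumes "p < 2" "q < 2" "e < 2^i"
  shows "qbitval (dec i A p q e) (Suc (Suc i)) = p"
proof -
  have c: "q * 2^i + e < 2^(Suc i)" using assms(2,3) by (cases "q = 0") (auto simp: less_2_cases_iff)
  have "dec i A p q e = A * 2^(Suc (Suc i)) + p * 2^(Suc i) + (q * 2^i + e)" by (simp add: dec_def algebra_simps)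
  then show ?thesis using decomp_parts(2)[OF assms(1) c] by simp
qed

lemma dec_f1:
  assumes "p < 2" "q < 2" "e < 2^i"
  shows "flip_bit i (dec i A p q e) = dec i A p (1 - q) e"
  using dec_q1[OF assms] assms(2) unfolding flip_bit_num
  by (cases "q = 0") (auto simp: dec_def less_2_cases_iff)

lemma dec_f2:
  assumes "p < 2" "q < 2" "e < 2^i"
  shows "flip_bit (Suc i) (dec i A p q e) = dec i A (1 - p) q e"
  using dec_q2[OF assms] assms(1) unfolding flip_bit_num
  by (cases "p = 0") (auto simp: dec_def less_2_cases_iff)

definition swf :: "nat \<Rightarrow> nat \<Rightarrow> nat" where
  "swf j y = cxf j (Suc j) (cxf (Suc j) j (cxf j (Suc j) y))"

lemma swf_dec:
  assumes "p < 2" "q < 2" "e < 2^i"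
  shows "swf (Suc i) (dec i A p q e) = dec i A q p e"
proof -
  have qb: "qbit (dec i A p' q' e) (Suc i) \<longleftrightarrow> q' = 1" "qbit (dec i A p' q' e) (Suc (Suc i)) \<longleftrightarrow> p' = 1"
    if "p' < 2" "q' < 2" for p' q'
    using dec_q1[OF that assms(3)] dec_q2[OF that assms(3)] by (auto simp: qbit_val)
  have fl: "flip_bit i (dec i A p' q' e) = dec i A p' (1 - q') e" "flip_bit (Suc i) (dec i A p' q' e) = dec i A (1 - p') q' e"
    if "p' < 2" "q' < 2" for p' q'
    using dec_f1[OF that assms(3)] dec_f2[OF that assms(3)] by auto
  show ?thesis
    using assms(1,2) qb fl unfolding swf_def cxf_def
    by (auto simp: less_2_cases_iff)
qed

definition sw :: "nat \<Rightarrow> nat \<Rightarrow> complex mat list" where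
  "sw m j = [cnot_gate m j (Suc j), cnot_gate m (Suc j) j, cnot_gate m j (Suc j)]"

lemma act_sw:
  assumes "j \<ge> 1" "Suc j \<le> m" "y < 2^m"
  shows "act m (sw m j) v y = v (swf j y)"
proof -
  have a: "j \<in> {1..m}" "Suc j \<in> {1..m}" using assms by auto
  have l1: "cxf j (Suc j) y < 2^m" using cxf_less[OF assms(3) a(2)] .
  have l2: "cxf (Suc j) j (cxf j (Suc j) y) < 2^m" using cxf_less[OF l1 a(1)] .
  show ?thesis using a l1 l2 assms(3) by (simp add: sw_def app_cnot swf_def)
qed

lemma swf_less: "j \<ge> 1 \<Longrightarrow> Suc j \<le> m \<Longrightarrow> y < 2^m \<Longrightarrow> swf j y < 2^m"
  unfolding swf_def by (intro cxf_less) auto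

lemma all_sw: "j \<ge> 1 \<Longrightarrow> Suc j \<le> m \<Longrightarrow> \<forall>G\<in>set (sw m j). elementary_gate m G"
  by (simp add: sw_def elem_cnot)

lemma length_sw[simp]: "length (sw m j) = 3" by (simp add: sw_def)

(* rotation of the lower Suc k qubits: the lowest qubit moves to position Suc k *)
fun rotL :: "nat \<Rightarrow> nat \<Rightarrow> complex mat list" where
  "rotL m 0 = []"
| "rotL m (Suc k) = sw m (Suc k) @ rotL m k"

fun rho :: "nat \<Rightarrow> nat \<Rightarrow> nat" where
  "rho 0 y = y"
| "rho (Suc k) y = rho k (swf (Suc k) y)"

lemma act_rotL:
  assumes "Suc k \<le> m"
  shows "y < 2^m \<Longrightarrow> act m (rotL m k) v y = v (rho k y)"
  using assms
proof (induction k arbitrary: y)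
  case 0 then show ?case by simp
next
  case (Suc k)
  have l: "swf (Suc k) y < 2^m" using swf_less Suc by auto
  show ?case using Suc.IH[OF l] Suc.prems l by (simp add: act_append act_sw)
qed

lemma all_rotL: "Suc k \<le> m \<Longrightarrow> \<forall>G\<in>set (rotL m k). elementary_gate m G"
proof (induction k)
  case 0 then show ?case by simp
next
  case (Suc k) then show ?case using all_sw[of "Suc k" m] by auto
qed

lemma length_rotL[simp]: "length (rotL m k) = 3 * k" by (induction k) auto

lemma rho_num:
  assumes "c < 2" "a < 2^k"
  shows "rho k (H * 2^(Suc k) + c * 2^k + a) = H * 2^(Suc k) + 2 * a + c"
  using assms
proof (induction k arbitrary: H c a)
  case 0 then show ?case by simp
next
  case (Suc k)
  define d where "d = a div 2^k"
  define e where "e = a mod 2^k"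
  have d2: "d < 2" using Suc.prems(2) by (simp add: d_def less_mult_imp_div_less power_Suc2)
  have e: "e < 2^k" by (simp add: e_def)
  have a: "a = d * 2^k + e" unfolding d_def e_def by (rule div_mult_mod_eq[symmetric])
  have y: "H * 2^(Suc (Suc k)) + c * 2^(Suc k) + a = dec k H c d e" by (simp add: dec_def a add.assoc)
  have "swf (Suc k) (dec k H c d e) = dec k H d c e" using swf_dec[OF Suc.prems(1) d2 e] .
  also have "\<dots> = (2 * H + d) * 2^(Suc k) + c * 2^k + e" by (simp add: dec_def algebra_simps)
  finally have s: "swf (Suc k) (H * 2^(Suc (Suc k)) + c * 2^(Suc k) + a) = (2 * H + d) * 2^(Suc k) + c * 2^k + e"
    using y by simp
  have "rho (Suc k) (H * 2^(Suc (Suc k)) + c * 2^(Suc k) + a) = (2 * H + d) * 2^(Suc k) + 2 * e + c"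
    using Suc.IH[OF Suc.prems(1) e] s by simp
  also have "\<dots> = H * 2^(Suc (Suc k)) + 2 * a + c" by (simp add: a algebra_simps)
  finally show ?case .
qed

lemma sum_even_odd: "(\<Sum>x<2*(K::nat). f x) = (\<Sum>a<K. f (2*a) + f (2*a+1))"
  by (induction K) (simp_all add: sum.distrib ac_simps)

lemma div_mult_add_less:
  assumes "(z::nat) < 2^m" "k \<le> m" "a < 2^k"
  shows "(z div 2^k) * 2^k + a < 2^m"
proof -
  have m: "(2::nat)^m = 2^(m-k) * 2^k" using assms(2) by (simp flip: power_add)
  have "z div 2^k < 2^(m-k)" using assms(1) m by (simp add: less_mult_imp_div_less)
  then have "z div 2^k + 1 \<le> 2^(m-k)" by simp
  then have "(z div 2^k + 1) * 2^k \<le> 2^(m-k) * 2^k" by (rule mult_right_mono) simp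
  then show ?thesis using assms(3) m by (simp add: algebra_simps)
qed

lemma dm_lin: "(s::nat) < K \<Longrightarrow> (s + A * K) div K = A" "(s::nat) < K \<Longrightarrow> (s + A * K) mod K = s"
  by simp_all

definition Fq :: "real \<Rightarrow> nat \<Rightarrow> nat \<Rightarrow> nat \<Rightarrow> complex" where
  "Fq sg k z x = cis (sg * 2 * pi * real z * real x / 2^k) / complex_of_real (sqrt (2^k))"

fun qft :: "nat \<Rightarrow> real \<Rightarrow> nat \<Rightarrow> complex mat list" where
  "qft m sg 0 = []"
| "qft m sg (Suc k) = [single_gate m (Suc k) Hm] @ cpl m (Suc k) (sg * 2 * pi / 2^(Suc k)) k @ qft m sg k @ rotL m k"

lemma length_qft: "length (qft m sg k) \<le> 4 * k * k"
proof (induction k)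
  case 0 then show ?case by simp
next
  case (Suc k) then show ?case by (simp add: algebra_simps)
qed

lemma all_qft: "k \<le> m \<Longrightarrow> \<forall>G\<in>set (qft m sg k). elementary_gate m G"
proof (induction k)
  case 0 then show ?case by simp
next
  case (Suc k)
  then show ?case using all_cpl[of k "Suc k" m] all_rotL[of k m] elem_single[of "Suc k" m Hm] unitary_Hm by auto
qed

lemma sg_int: "sg = 1 \<or> sg = -1 \<Longrightarrow> sg \<in> \<int>" by auto

lemma cis_int_mult: "sg = 1 \<or> sg = -1 \<Longrightarrow> cis (2 * pi * (sg * real t * real a)) = 1"
proof -
  assume "sg = 1 \<or> sg = -1"
  then have "sg * real t * real a \<in> \<int>" by (auto intro!: Ints_mult)
  then show ?thesis by (rule cis_multiple_2pi)
qed

lemma sqrt_pow_Suc: "complex_of_real (sqrt (2^(Suc k))) = complex_of_real (sqrt 2) * complex_of_real (sqrt (2^k))"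
  by (simp add: real_sqrt_mult)

lemma hr_eq: "hr = 1 / complex_of_real (sqrt 2)" by (simp add: hr_def)

lemma Fq_even:
  assumes "sg = 1 \<or> sg = -1"
  shows "Fq sg (Suc k) (t * 2^k + s) (2 * a) = hr * Fq sg k s a"
proof -
  have "sg * 2 * pi * real (t * 2^k + s) * real (2 * a) / 2^(Suc k) =
        2 * pi * (sg * real t * real a) + sg * 2 * pi * real s * real a / 2^k"
    by (simp add: field_simps)
  then have "cis (sg * 2 * pi * real (t * 2^k + s) * real (2 * a) / 2^(Suc k)) =
        cis (sg * 2 * pi * real s * real a / 2^k)"
    using cis_int_mult[OF assms, of t a] by (simp add: cis_mult[symmetric])
  then show ?thesis unfolding Fq_def hr_eq sqrt_pow_Suc by simp
qed

lemma Fq_odd: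
  assumes "sg = 1 \<or> sg = -1" "t < 2"
  shows "Fq sg (Suc k) (t * 2^k + s) (2 * a + 1) =
    hr * (if t = 1 then -1 else 1) * cis (sg * 2 * pi / 2^(Suc k) * real s) * Fq sg k s a"
proof -
  have "sg * 2 * pi * real (t * 2^k + s) * real (2 * a + 1) / 2^(Suc k) =
        2 * pi * (sg * real t * real a) + sg * pi * real t + sg * 2 * pi / 2^(Suc k) * real s
        + sg * 2 * pi * real s * real a / 2^k"
    by (simp add: field_simps)
  moreover have "cis (sg * pi * real t) = (if t = 1 then -1 else 1)"
    using assms by (auto simp: less_2_cases_iff complex_eq_iff)
  ultimately have "cis (sg * 2 * pi * real (t * 2^k + s) * real (2 * a + 1) / 2^(Suc k)) =
        (if t = 1 then -1 else 1) * cis (sg * 2 * pi / 2^(Suc k) * real s) * cis (sg * 2 * pi * real s * real a / 2^k)"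
    using cis_int_mult[OF assms(1), of t a] by (simp add: cis_mult[symmetric])
  then show ?thesis unfolding Fq_def hr_eq sqrt_pow_Suc by simp
qed

lemma act_qft:
  assumes "sg = 1 \<or> sg = -1" "k \<le> m" "y < 2^m"
  shows "act m (qft m sg k) v y = (\<Sum>x<2^k. Fq sg k (y mod 2^k) x * v ((y div 2^k) * 2^k + x))"
  using assms(2,3)
proof (induction k arbitrary: y v)
  case 0 then show ?case by (simp add: Fq_def)
next
  case (Suc k)
  let ?K = "(2::nat)^k"
  let ?al = "sg * 2 * pi / 2^(Suc k)"
  define H0 where "H0 = y div 2^(Suc k)"
  define t where "t = qbitval y (Suc k)"
  define s where "s = y mod 2^k"
  define B where "B = H0 * 2^(Suc k)"
  have t2: "t < 2" by (simp add: t_def qbitval_def)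
  have s: "s < ?K" by (simp add: s_def)
  have y: "y = B + t * ?K + s" unfolding B_def H0_def t_def s_def by (rule decomp_Suc)
  have u: "unset_bit k y = B + s"
  proof -
    have "unset_bit k y = y - t * ?K" by (simp add: unset_bit_num t_def)
    then show ?thesis using y by simp
  qed
  have st: "set_bit k y = B + ?K + s" by (simp add: set_bit_num u)
  define Q where "Q = act m (qft m sg k) (act m (rotL m k) v)"
  define W where "W = act m (cpl m (Suc k) ?al k @ qft m sg k @ rotL m k) v"
  have km: "k \<le> m" using Suc by simp
  have ym: "y < 2^m" using Suc by simp
  have Qz: "Q z = (\<Sum>a<?K. Fq sg k (z mod ?K) a * v (rho k ((z div ?K) * ?K + a)))" if "z < 2^m" for z
    unfolding Q_def using Suc.IH[OF km that, of "act m (rotL m k) v"] Suc.prems div_mult_add_less[OF that km]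
    by (auto intro!: sum.cong simp: act_rotL)
  have Wz: "W z = (if qbit z (Suc k) then cis (?al * real (z mod ?K)) else 1) * Q z" if "z < 2^m" for z
    unfolding W_def Q_def using that Suc.prems by (simp add: act_append act_cpl)
  have um: "B + s < 2^m" using u unset_bit_less[OF ym] by metis
  have sm: "B + ?K + s < 2^m" using st set_bit_less[OF ym, of k] Suc.prems by simp
  have B2: "B = (2 * H0) * ?K" by (simp add: B_def)
  have pu: "qbitval (B + s) (Suc k) = 0" "(B + s) mod ?K = s" "(B + s) div ?K = 2 * H0"
  proof -
    show "qbitval (B + s) (Suc k) = 0" using decomp_parts(2)[of 0 s k H0] s by (simp add: B_def)
    have "B + s = s + (2 * H0) * ?K" using B2 by simp
    then show "(B + s) mod ?K = s" "(B + s) div ?K = 2 * H0" using s by simp_all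
  qed
  have ps: "qbitval (B + ?K + s) (Suc k) = 1" "(B + ?K + s) mod ?K = s" "(B + ?K + s) div ?K = 2 * H0 + 1"
  proof -
    show "qbitval (B + ?K + s) (Suc k) = 1" using decomp_parts(2)[of 1 s k H0] s by (simp add: B_def)
    have e: "B + ?K + s = s + (2 * H0 + 1) * ?K" using B2 by (simp add: algebra_simps)
    show "(B + ?K + s) mod ?K = s" "(B + ?K + s) div ?K = 2 * H0 + 1"
      using dm_lin[OF s, of "2 * H0 + 1"] by (simp_all only: e)
  qed
  have r0: "rho k ((2 * H0) * ?K + a) = B + 2 * a" if "a < ?K" for a
    using rho_num[of 0 a k H0] that by (simp add: B_def algebra_simps)
  have r1: "rho k ((2 * H0 + 1) * ?K + a) = B + 2 * a + 1" if "a < ?K" for a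
    using rho_num[of 1 a k H0] that by (simp add: B_def algebra_simps)
  have Q0: "Q (B + s) = (\<Sum>a<?K. Fq sg k s a * v (B + 2 * a))"
    using Qz[OF um] pu r0 by simp
  have Q1: "Q (B + ?K + s) = (\<Sum>a<?K. Fq sg k s a * v (B + 2 * a + 1))"
    using Qz[OF sm] ps r1 by simp
  have W0: "W (B + s) = Q (B + s)" using Wz[OF um] pu by (simp add: qbit_val)
  have W1: "W (B + ?K + s) = cis (?al * real s) * Q (B + ?K + s)" using Wz[OF sm] ps by (simp add: qbit_val)
  have sgn: "(if qbit y (Suc k) then -1 else 1) = (if t = 1 then -1 else (1::complex))"
    by (simp add: t_def qbit_val)
  have "act m (qft m sg (Suc k)) v y = app m (single_gate m (Suc k) Hm) W y"
    by (simp add: W_def)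
  also have "\<dots> = hr * (W (B + s) + (if t = 1 then -1 else 1) * W (B + ?K + s))"
    using app_H[of "Suc k" m y W] Suc.prems u st sgn by simp
  also have "\<dots> = hr * ((\<Sum>a<?K. Fq sg k s a * v (B + 2 * a)) +
       (if t = 1 then -1 else 1) * cis (?al * real s) * (\<Sum>a<?K. Fq sg k s a * v (B + 2 * a + 1)))"
    using W0 W1 Q0 Q1 by simp
  also have "\<dots> = (\<Sum>a<?K. Fq sg (Suc k) (t * ?K + s) (2 * a) * v (B + 2 * a) +
       Fq sg (Suc k) (t * ?K + s) (2 * a + 1) * v (B + 2 * a + 1))"
    using Fq_even[OF assms(1)] Fq_odd[OF assms(1) t2]
    by (simp add: sum.distrib sum_distrib_left algebra_simps)
  also have "\<dots> = (\<Sum>x<2 * ?K. Fq sg (Suc k) (t * ?K + s) x * v (B + x))"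
    using sum_even_odd[of "\<lambda>x. Fq sg (Suc k) (t * ?K + s) x * v (B + x)" ?K] by simp
  also have "\<dots> = (\<Sum>x<2^(Suc k). Fq sg (Suc k) (y mod 2^(Suc k)) x * v ((y div 2^(Suc k)) * 2^(Suc k) + x))"
  proof -
    have "y mod 2^(Suc k) = t * ?K + s" using mod_Suc_split[of y k] by (simp add: t_def s_def)
    moreover have "(y div 2^(Suc k)) * 2^(Suc k) = B" by (simp add: B_def H0_def)
    ultimately show ?thesis by simp
  qed
  finally show ?case .
qed

lemma orth:
  fixes d :: int and K :: nat
  assumes "K > 0"
  shows "(\<Sum>j<K. cis (2 * pi * real j * of_int d / real K)) = (if int K dvd d then of_nat K else 0)"
proof -
  define w where "w = cis (2 * pi * of_int d / real K)"
  have t: "cis (2 * pi * real j * of_int d / real K) = w ^ j" for j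
    unfolding w_def DeMoivre by (simp add: field_simps)
  have wK: "w ^ K = 1"
  proof -
    have "w ^ K = cis (2 * pi * of_int d)" unfolding w_def DeMoivre using assms by (simp add: field_simps)
    then show ?thesis by simp
  qed
  show ?thesis
  proof (cases "int K dvd d")
    case True
    then obtain q where q: "d = int K * q" by blast
    have "w = cis (2 * pi * of_int q)" unfolding w_def q using assms by (simp add: field_simps)
    then have "w = 1" by simp
    then show ?thesis using True t by simp
  next
    case False
    have "w \<noteq> 1"
    proof
      assume "w = 1"
      then have "cos (2 * pi * of_int d / real K) = 1" unfolding w_def by (simp add: complex_eq_iff)
      then obtain n :: int where n: "2 * pi * of_int d / real K = of_int n * 2 * pi" by (auto simp: cos_one_2pi_int)
      then have "real_of_int d = of_int n * real K" using assms by (simp add: field_simps)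
      then have "d = n * int K" by (metis of_int_eq_iff of_int_mult of_int_of_nat_eq)
      then show False using False by simp
    qed
    then have "(\<Sum>j<K. w ^ j) = 0" using wK by (simp add: sum_gp_strict)
    then show ?thesis using False t by simp
  qed
qed

lemma dvd_mod_iff:
  assumes "x < K"
  shows "int K dvd (int x - int z - int sh) \<longleftrightarrow> x = (z + sh) mod K"
proof -
  have "int K dvd (int x - int z - int sh) \<longleftrightarrow> int x mod int K = (int z + int sh) mod int K"
    by (simp add: mod_eq_dvd_iff diff_diff_eq)
  also have "\<dots> \<longleftrightarrow> x mod K = (z + sh) mod K"
    by (metis of_nat_add of_nat_eq_iff zmod_int)
  also have "\<dots> \<longleftrightarrow> x = (z + sh) mod K" using assms by simp
  finally show ?thesis .
qed

lemma sqrt_sq_c: "complex_of_real (sqrt (2^k)) * complex_of_real (sqrt (2^k)) = 2^k"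
  by (metis of_real_mult of_real_numeral of_real_power real_sqrt_mult_self zero_le_numeral zero_le_power
      real_sqrt_pow2 power2_eq_square)

lemma Fq_prod_e:
  "Fq (-1) k z j * cis (- 2 * pi * real c * real j / 2^k) * Fq 1 k j x =
   cis (2 * pi * real j * of_int (int x - int z - int c) / real ((2::nat)^k)) / 2^k"
proof -
  have "Fq (-1) k z j * cis (- 2 * pi * real c * real j / 2^k) * Fq 1 k j x =
    (cis (-1 * 2 * pi * real z * real j / 2^k) * cis (- 2 * pi * real c * real j / 2^k) * cis (1 * 2 * pi * real j * real x / 2^k))
    / (complex_of_real (sqrt (2^k)) * complex_of_real (sqrt (2^k)))"
    unfolding Fq_def by simp
  also have "\<dots> = cis (-1 * 2 * pi * real z * real j / 2^k + - 2 * pi * real c * real j / 2^k + 1 * 2 * pi * real j * real x / 2^k) / 2^k"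
    unfolding sqrt_sq_c cis_mult by simp
  also have "-1 * 2 * pi * real z * real j / 2^k + - 2 * pi * real c * real j / 2^k + 1 * 2 * pi * real j * real x / 2^k
     = 2 * pi * real j * of_int (int x - int z - int c) / real ((2::nat)^k)"
    by (simp add: field_simps)
  finally show ?thesis .
qed

lemma act_sandwich:
  assumes km: "k \<le> m" and ym: "y < 2^m"
    and D: "\<And>w u. w < 2^m \<Longrightarrow> act m D u w = cis (- 2 * pi * real (sh (w div 2^k)) * real (w mod 2^k) / 2^k) * u w"
  shows "act m (qft m (-1) k @ D @ qft m 1 k) v y = v ((y div 2^k) * 2^k + (y mod 2^k + sh (y div 2^k)) mod 2^k)"
proof -
  let ?K = "(2::nat)^k"
  define hi where "hi = y div ?K"
  define z where "z = y mod ?K"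
  define c where "c = sh hi"
  define a where "a = (\<lambda>j. Fq (-1) k z j * cis (- 2 * pi * real c * real j / 2^k))"
  have lt: "hi * ?K + a < 2^m" if "a < ?K" for a using div_mult_add_less[OF ym km that] by (simp add: hi_def)
  have dm: "(hi * ?K + a) div ?K = hi" "(hi * ?K + a) mod ?K = a" if "a < ?K" for a
    using that by simp_all
  have inner: "(\<Sum>j<?K. a j * Fq 1 k j x) = (if x = (z + c) mod ?K then 1 else 0)" if "x < ?K" for x
  proof -
    have "(\<Sum>j<?K. a j * Fq 1 k j x) =
          (\<Sum>j<?K. cis (2 * pi * real j * of_int (int x - int z - int c) / real ?K)) / 2^k"
      unfolding a_def sum_divide_distrib by (intro sum.cong refl) (rule Fq_prod_e)
    also have "\<dots> = (if int ?K dvd (int x - int z - int c) then 1 else 0)"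
      by (subst orth) simp_all
    also have "\<dots> = (if x = (z + c) mod ?K then 1 else 0)" using dvd_mod_iff[OF that] by simp
    finally show ?thesis .
  qed
  have "act m (qft m (-1) k @ D @ qft m 1 k) v y =
     (\<Sum>j<?K. Fq (-1) k z j * act m D (act m (qft m 1 k) v) (hi * ?K + j))"
    using act_qft[of "-1" k m y] km ym by (simp add: act_append hi_def z_def)
  also have "\<dots> = (\<Sum>j<?K. a j * (\<Sum>x<?K. Fq 1 k j x * v (hi * ?K + x)))"
    unfolding a_def using lt dm act_qft[of 1 k m] km by (intro sum.cong refl) (simp add: D c_def mult.assoc)
  also have "\<dots> = (\<Sum>j<?K. \<Sum>x<?K. a j * Fq 1 k j x * v (hi * ?K + x))"
    by (simp add: sum_distrib_left mult.assoc)
  also have "\<dots> = (\<Sum>x<?K. \<Sum>j<?K. a j * Fq 1 k j x * v (hi * ?K + x))"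
    by (rule sum.swap)
  also have "\<dots> = (\<Sum>x<?K. (\<Sum>j<?K. a j * Fq 1 k j x) * v (hi * ?K + x))"
    by (simp add: sum_distrib_right)
  also have "\<dots> = (\<Sum>x<?K. (if x = (z + c) mod ?K then v (hi * ?K + x) else 0))"
    using inner by (intro sum.cong refl) simp
  also have "\<dots> = v (hi * ?K + (z + c) mod ?K)" by simp
  finally show ?thesis by (simp add: hi_def z_def c_def)
qed

definition shiftU :: "nat \<Rightarrow> nat \<Rightarrow> nat \<Rightarrow> complex mat list" where
  "shiftU m k sh = qft m (-1) k @ pl m (- 2 * pi * real sh / 2^k) k @ qft m 1 k"

lemma act_shiftU:
  assumes "k \<le> m" "y < 2^m"
  shows "act m (shiftU m k sh) v y = v ((y div 2^k) * 2^k + (y mod 2^k + sh) mod 2^k)"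
  unfolding shiftU_def
  by (rule act_sandwich[OF assms, where sh = "\<lambda>_. sh", simplified])
     (simp add: act_pl assms(1) field_simps)

lemma qbit_high: "k < c \<Longrightarrow> qbit w c \<longleftrightarrow> odd ((w div 2^k) div 2^(c - 1 - k))"
proof -
  assume "k < c"
  then have "(2::nat)^(c-1) = 2^k * 2^(c-1-k)" by (simp flip: power_add)
  then show ?thesis by (simp add: qbit_def div_mult2_eq)
qed

definition shiftC :: "nat \<Rightarrow> nat \<Rightarrow> nat \<Rightarrow> nat \<Rightarrow> complex mat list" where
  "shiftC m c k sh = qft m (-1) k @ cpl m c (- 2 * pi * real sh / 2^k) k @ qft m 1 k"

lemma act_shiftC:
  assumes "k < c" "c \<le> m" "y < 2^m"
  shows "act m (shiftC m c k sh) v y =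
    v ((y div 2^k) * 2^k + (y mod 2^k + (if qbit y c then sh else 0)) mod 2^k)"
proof -
  have km: "k \<le> m" using assms by simp
  have "act m (shiftC m c k sh) v y = v ((y div 2^k) * 2^k + (y mod 2^k +
      (\<lambda>h. if odd (h div 2^(c - 1 - k)) then sh else 0) (y div 2^k)) mod 2^k)"
    unfolding shiftC_def
  proof (rule act_sandwich[OF km assms(3)])
    fix w u assume w: "w < (2::nat)^m"
    show "act m (cpl m c (- 2 * pi * real sh / 2 ^ k) k) u w =
      cis (- 2 * pi * real (if odd (w div 2^k div 2^(c - 1 - k)) then sh else 0) * real (w mod 2^k) / 2^k) * u w"
      using act_cpl[OF assms(1,2) w] qbit_high[OF assms(1), of w] by (simp add: field_simps)
  qed
  then show ?thesis using qbit_high[OF assms(1), of y] by simp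
qed

lemma length_shiftU: "length (shiftU m k sh) \<le> 9 * k * k"
proof -
  have "length (shiftU m k sh) = length (qft m (-1) k) + k + length (qft m 1 k)" by (simp add: shiftU_def)
  also have "\<dots> \<le> 4 * k * k + k * k + 4 * k * k"
    using length_qft[of m "-1" k] length_qft[of m 1 k] le_square[of k] by (intro add_mono) auto
  also have "\<dots> = 9 * k * k" by simp
  finally show ?thesis .
qed
lemma length_shiftC: "length (shiftC m c k sh) \<le> 13 * k * k"
proof -
  have "length (shiftC m c k sh) = length (qft m (-1) k) + 5 * k + length (qft m 1 k)" by (simp add: shiftC_def)
  also have "\<dots> \<le> 4 * k * k + 5 * (k * k) + 4 * k * k"
    using length_qft[of m "-1" k] length_qft[of m 1 k] le_square[of k] by (intro add_mono) auto
  also have "\<dots> = 13 * k * k" by simp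
  finally show ?thesis .
qed

lemma all_shiftU: assumes "k \<le> m" shows "\<forall>G\<in>set (shiftU m k sh). elementary_gate m G"
  using all_qft[OF assms, of "-1"] all_qft[OF assms, of 1] all_pl[OF assms] unfolding shiftU_def by auto
lemma all_shiftC: assumes "k < c" "c \<le> m" shows "\<forall>G\<in>set (shiftC m c k sh). elementary_gate m G"
proof -
  have "k \<le> m" using assms by simp
  then show ?thesis using all_qft[of k m "-1"] all_qft[of k m 1] all_cpl[OF assms] unfolding shiftC_def by auto
qed

definition cmpl :: "nat \<Rightarrow> nat \<Rightarrow> nat" where
  "cmpl k y = (y div 2^k) * 2^k + (2^k - 1 - y mod 2^k)"

lemma cmpl_flip: "cmpl k (flip_bit k y) = cmpl (Suc k) y"
proof -
  define H where "H = y div 2^(Suc k)"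
  define t where "t = qbitval y (Suc k)"
  define s where "s = y mod 2^k"
  have t2: "t < 2" by (simp add: t_def qbitval_def)
  have s: "s < 2^k" by (simp add: s_def)
  have y: "y = H * 2^(Suc k) + t * 2^k + s" unfolding H_def t_def s_def by (rule decomp_Suc)
  have f: "flip_bit k y = (2 * H + 1 - t) * 2^k + s"
    using t2 unfolding flip_bit_num t_def[symmetric] by (auto simp: y less_2_cases_iff algebra_simps)
  have c1: "cmpl k (flip_bit k y) = (2 * H + 1 - t) * 2^k + (2^k - 1 - s)"
    unfolding cmpl_def f using s dm_lin[OF s, of "2 * H + 1 - t"] by (simp add: add.commute)
  have ym: "y mod 2^(Suc k) = t * 2^k + s" using mod_Suc_split[of y k] by (simp add: t_def s_def)
  have c2: "cmpl (Suc k) y = H * 2^(Suc k) + (2^(Suc k) - 1 - (t * 2^k + s))"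
    unfolding cmpl_def ym H_def by simp
  show ?thesis using t2 s unfolding c1 c2 by (auto simp: less_2_cases_iff algebra_simps)
qed

lemma cmpl_less: "y < 2^m \<Longrightarrow> k \<le> m \<Longrightarrow> cmpl k y < 2^m"
  unfolding cmpl_def by (rule div_mult_add_less) auto

fun xl :: "nat \<Rightarrow> nat \<Rightarrow> complex mat list" where
  "xl m 0 = []"
| "xl m (Suc k) = single_gate m (Suc k) Xm # xl m k"

lemma act_xl: "k \<le> m \<Longrightarrow> y < 2^m \<Longrightarrow> act m (xl m k) v y = v (cmpl k y)"
proof (induction k arbitrary: y)
  case 0 then show ?case by (simp add: cmpl_def)
next
  case (Suc k)
  have l: "flip_bit k y < 2^m" using flip_bit_less Suc.prems by auto
  show ?case using Suc l by (simp add: app_X cmpl_flip)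
qed

lemma all_xl: "k \<le> m \<Longrightarrow> \<forall>G\<in>set (xl m k). elementary_gate m G"
  by (induction k) (simp_all add: elem_single unitary_Xm)
lemma length_xl[simp]: "length (xl m k) = k" by (induction k) auto

fun cxl :: "nat \<Rightarrow> nat \<Rightarrow> nat \<Rightarrow> complex mat list" where
  "cxl m c 0 = []"
| "cxl m c (Suc k) = cnot_gate m c (Suc k) # cxl m c k"

lemma act_cxl: "k < c \<Longrightarrow> c \<le> m \<Longrightarrow> y < 2^m \<Longrightarrow> act m (cxl m c k) v y = v (if qbit y c then cmpl k y else y)"
proof (induction k arbitrary: y)
  case 0 then show ?case by (simp add: cmpl_def)
next
  case (Suc k)
  have a: "c \<in> {1..m}" "Suc k \<in> {1..m}" "c \<noteq> Suc k" using Suc.prems by auto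
  have l: "cxf c (Suc k) y < 2^m" using cxf_less[OF Suc.prems(3) a(2)] .
  have q: "qbit (cxf c (Suc k) y) c = qbit y c"
    using a by (auto simp: cxf_def qbit_bit bit_flip_bit_iff)
  show ?case using Suc.IH[OF _ Suc.prems(2) l] Suc.prems a l q
    by (auto simp: app_cnot cxf_def cmpl_flip)
qed

lemma all_cxl: "k < c \<Longrightarrow> c \<le> m \<Longrightarrow> \<forall>G\<in>set (cxl m c k). elementary_gate m G"
  by (induction k) (simp_all add: elem_cnot)
lemma length_cxl[simp]: "length (cxl m c k) = k" by (induction k) auto

lemma topbit: "y < 2 * 2^n \<Longrightarrow> qbit y (Suc n) \<longleftrightarrow> 2^n \<le> y"
proof -
  assume y: "y < 2 * 2^n"
  have d: "y div 2^n < 2" using y by (simp add: less_mult_imp_div_less mult.commute)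
  have g: "0 < y div 2^n \<longleftrightarrow> 2^n \<le> y" by (simp add: div_greater_zero_iff)
  show ?thesis
  proof (cases "y div 2^n = 0")
    case True then show ?thesis using g by (simp add: qbit_Suc)
  next
    case False then have "y div 2^n = 1" using d by linarith
    then show ?thesis using g by (simp add: qbit_Suc)
  qed
qed

lemma unset_top: "(y::nat) < 2 * 2^n \<Longrightarrow> unset_bit n y = (if 2^n \<le> y then y - 2^n else y)"
  using topbit[of y n] by (simp add: unset_bit_num qbitval_eq)

lemma set_top: "(y::nat) < 2 * 2^n \<Longrightarrow> set_bit n y = (if 2^n \<le> y then y else y + 2^n)"
  using topbit[of y n] by (simp add: set_bit_num unset_top)

lemma cmpl_top: "2^n \<le> y \<Longrightarrow> y < 2 * 2^n \<Longrightarrow> cmpl n y = 3 * 2^n - 1 - y"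
proof -
  assume a: "2^n \<le> y" "y < 2 * 2^n"
  have "y div 2^n = 1" using a by (simp add: div_nat_eqI)  
  moreover have "y mod 2^n = y - 2^n" using a by (simp add: le_mod_geq)
  ultimately show ?thesis using a by (simp add: cmpl_def)
qed

lemma cmpl_full: "y < 2^m \<Longrightarrow> cmpl m y = 2^m - 1 - y"
  by (simp add: cmpl_def)

lemma S12:
  assumes "y < 2 * 2^n"
  shows "act (Suc n) (cxl (Suc n) (Suc n) n @ [single_gate (Suc n) (Suc n) Hm]) v y =
    hr * (if y < 2^n then v y + v (y + 2^n) else v (2 * 2^n - 1 - y) - v (3 * 2^n - 1 - y))"
proof -
  let ?N = "(2::nat)^n"
  have ym: "y < 2^(Suc n)" using assms by simp
  show ?thesis
  proof (cases "y < ?N")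
    case True
    then show ?thesis using ym topbit[OF assms]
      by (simp add: act_append act_cxl app_H unset_top set_top)
  next
    case False
    define z where "z = 3 * ?N - 1 - y"
    have c: "cmpl n y = z" using False assms cmpl_top[of n y] by (simp add: z_def)
    have z: "?N \<le> z" "z < 2 * ?N" using False assms by (auto simp: z_def)
    have zm: "z < 2^(Suc n)" using z by simp
    have "act (Suc n) (cxl (Suc n) (Suc n) n @ [single_gate (Suc n) (Suc n) Hm]) v y =
       app (Suc n) (single_gate (Suc n) (Suc n) Hm) v z"
      using ym topbit[OF assms] False c by (simp add: act_append act_cxl)
    also have "\<dots> = hr * (v (z - ?N) - v z)"
      using zm z topbit[OF z(2)] by (simp add: app_H unset_top set_top)
    also have "z - ?N = 2 * ?N - 1 - y" by (simp add: z_def)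
    finally show ?thesis using False by (simp add: z_def)
  qed
qed

lemma S3:
  assumes "y < 2^m"
  shows "act m (qft m (-1) m) v y = (\<Sum>x<2^m. Fq (-1) m y x * v x)"
  using act_qft[of "-1" m m y v] assms by simp

lemma S4:
  assumes "y < 2^m"
  shows "act m (pl m al m) v y = cis (al * real y) * v y"
  using act_pl[of m m y al v] assms by simp

lemma S5:
  assumes "y < 2 * 2^n"
  shows "act (Suc n) (shiftC (Suc n) (Suc n) n (2^n - 1) @ cxl (Suc n) (Suc n) n) v y =
    v (if y < 2^n then y else if y = 2^n then 2^n else 3 * 2^n - y)"
proof -
  let ?N = "(2::nat)^n"
  have ym: "y < 2^(Suc n)" using assms by simp
  define s where "s = (y div ?N) * ?N + (y mod ?N + (if qbit y (Suc n) then ?N - 1 else 0)) mod ?N"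
  have sm: "s < 2^(Suc n)" unfolding s_def by (rule div_mult_add_less[OF ym]) auto
  have "act (Suc n) (shiftC (Suc n) (Suc n) n (?N - 1) @ cxl (Suc n) (Suc n) n) v y =
     act (Suc n) (cxl (Suc n) (Suc n) n) v s"
    using ym by (simp add: act_append act_shiftC s_def)
  also have "\<dots> = v (if qbit s (Suc n) then cmpl n s else s)"
    using sm by (simp add: act_cxl)
  also have "(if qbit s (Suc n) then cmpl n s else s) = (if y < ?N then y else if y = ?N then ?N else 3 * ?N - y)"
  proof (cases "y < ?N")
    case True
    then have "s = y" using topbit[OF assms] by (simp add: s_def)
    then show ?thesis using True topbit[OF assms] by simp
  next
    case False
    have d: "y div ?N = 1" using False assms by (simp add: div_nat_eqI)
    have md: "y mod ?N = y - ?N" using False assms by (simp add: le_mod_geq)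
    show ?thesis
    proof (cases "y = ?N")
      case True
      then have "s = 2 * ?N - 1" using topbit[OF assms] d by (simp add: s_def)
      moreover have "cmpl n (2 * ?N - 1) = ?N" using cmpl_top[of n "2 * ?N - 1"] by simp
      ultimately show ?thesis using True topbit[of "2 * ?N - 1" n] by simp
    next
      case ne: False
      have e: "y - ?N + (?N - 1) = (y - 1 - ?N) + ?N" using ne False by simp
      have "(y - ?N + (?N - 1)) mod ?N = y - 1 - ?N" unfolding e using assms by simp
      then have "s = y - 1" using topbit[OF assms] d md False ne by (simp add: s_def)
      moreover have "cmpl n (y - 1) = 3 * ?N - y" using cmpl_top[of n "y - 1"] False ne assms by simp
      moreover have "qbit (y - 1) (Suc n)" using topbit[of "y - 1" n] False ne assms by simp
      ultimately show ?thesis using False ne by simp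
    qed
  qed
  finally show ?thesis .
qed

lemma dmN: "a < (N::nat) \<Longrightarrow> (A * N + a) div N = A" "a < (N::nat) \<Longrightarrow> (A * N + a) mod N = a"
  by simp_all

definition Fl :: "nat \<Rightarrow> complex mat list" where
  "Fl n = shiftU (Suc n) (Suc n) (2 * 2^n - 1) @ xl (Suc n) (Suc n) @ shiftU (Suc n) n (2^n - 1) @ xl (Suc n) n"

definition flf :: "nat \<Rightarrow> nat \<Rightarrow> nat" where
  "flf n y = (if y mod 2^n = 0 then y else if y < 2^n then y + 2^n else y - 2^n)"

lemma dmc: "(x::nat) = q * N + r \<Longrightarrow> r < N \<Longrightarrow> x div N = q" "(x::nat) = q * N + r \<Longrightarrow> r < N \<Longrightarrow> x mod N = r"
  by simp_all

lemma flf_arith: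
  fixes N y :: nat
  assumes N: "N > 0" and y: "y < 2 * N"
  defines "y1 \<equiv> (y + (2 * N - 1)) mod (2 * N)"
  defines "y2 \<equiv> 2 * N - 1 - y1"
  defines "y3 \<equiv> (y2 div N) * N + (y2 mod N + (N - 1)) mod N"
  shows "(y3 div N) * N + (N - 1 - y3 mod N) = (if y mod N = 0 then y else if y < N then y + N else y - N)"
proof -
  consider "y = 0" | "0 < y" "y < N" | "y = N" | "N < y" by linarith
  then show ?thesis
  proof cases
    case 1
    have "y1 = 2 * N - 1" unfolding y1_def using 1 N by (intro dmc(2)[where q=0]) auto
    then have "y2 = 0" by (simp add: y2_def)
    then have "y3 = N - 1" using N by (simp add: y3_def)
    then have "y3 div N = 0" "y3 mod N = N - 1" using N by simp_all
    then show ?thesis using 1 \<open>y3 = N - 1\<close> by simp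
  next
    case 2
    have "y1 = y - 1" unfolding y1_def using 2 N by (intro dmc(2)[where q=1]) auto
    then have e2: "y2 = 2 * N - y" using 2 by (simp add: y2_def)
    have d2: "y2 = 1 * N + (N - y)" using 2 e2 by simp
    have "y2 div N = 1" "y2 mod N = N - y" using dmc[OF d2] 2 by auto
    moreover have "(N - y + (N - 1)) mod N = N - y - 1" using 2 by (intro dmc(2)[where q=1]) auto
    ultimately have e3: "y3 = N + (N - y - 1)" by (simp add: y3_def)
    have d3: "y3 = 1 * N + (N - y - 1)" using e3 by simp
    have "y3 div N = 1" "y3 mod N = N - y - 1" using dmc[OF d3] 2 by auto
    then show ?thesis using 2 e3 by simp
  next
    case 3
    have "y1 = N - 1" unfolding y1_def using 3 N by (intro dmc(2)[where q=1]) auto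
    then have e2: "y2 = N" using 3 N by (simp add: y2_def)
    have e3: "y3 = N + (N - 1)" using N by (simp add: y3_def e2)
    have d3: "y3 = 1 * N + (N - 1)" using e3 by simp
    have "y3 div N = 1" "y3 mod N = N - 1" using dmc[OF d3] N by auto
    then show ?thesis using 3 e3 by simp
  next
    case 4
    have "y1 = y - 1" unfolding y1_def using 4 y by (intro dmc(2)[where q=1]) auto
    then have e2: "y2 = 2 * N - y" using 4 by (simp add: y2_def)
    have d2: "y2 = 0 * N + (2 * N - y)" using e2 by simp
    have "y2 div N = 0" "y2 mod N = 2 * N - y" using dmc[OF d2] 4 y by auto
    moreover have "(2 * N - y + (N - 1)) mod N = 2 * N - y - 1" using 4 y by (intro dmc(2)[where q=1]) auto
    ultimately have e3: "y3 = 2 * N - y - 1" by (simp add: y3_def)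
    have d3: "y3 = 0 * N + (2 * N - y - 1)" using e3 by simp
    have "y3 div N = 0" "y3 mod N = 2 * N - y - 1" using dmc[OF d3] 4 y by auto
    moreover have "y mod N \<noteq> 0"
    proof
      assume "y mod N = 0"
      moreover have "y mod N = y - N" using 4 y by (intro dmc(2)[where q=1]) auto
      ultimately show False using 4 by simp
    qed
    ultimately show ?thesis using 4 y e3 by simp
  qed
qed

lemma act_Fl:
  assumes "y < 2 * 2^n"
  shows "act (Suc n) (Fl n) v y = v (flf n y)"
proof -
  let ?N = "(2::nat)^n" and ?m = "Suc n"
  define y1 where "y1 = (y + (2 * ?N - 1)) mod (2 * ?N)"
  define y2 where "y2 = 2 * ?N - 1 - y1"
  define y3 where "y3 = (y2 div ?N) * ?N + (y2 mod ?N + (?N - 1)) mod ?N"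
  have y1: "y1 < 2^?m" by (simp add: y1_def)
  have y2: "y2 < 2^?m" using y1 by (simp add: y2_def)
  have y3: "y3 < 2^?m" unfolding y3_def using div_mult_add_less[of y2 "Suc n" n] y2 by simp
  have ym: "y < 2^?m" using assms by simp
  have "act ?m (Fl n) v y = act ?m (xl ?m ?m @ shiftU ?m n (?N - 1) @ xl ?m n) v y1"
    unfolding Fl_def act_append using act_shiftU[OF le_refl ym] assms by (simp add: y1_def)
  also have "\<dots> = act ?m (shiftU ?m n (?N - 1) @ xl ?m n) v y2"
    unfolding act_append using act_xl[OF le_refl y1] cmpl_full[OF y1] by (simp add: y2_def)
  also have "\<dots> = act ?m (xl ?m n) v y3"
    unfolding act_append using act_shiftU[of n ?m y2] y2 by (simp add: y3_def)
  also have "\<dots> = v (cmpl n y3)" using act_xl[of n ?m y3] y3 by simp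
  also have "cmpl n y3 = flf n y"
    unfolding cmpl_def flf_def y3_def y2_def y1_def by (rule flf_arith) (use assms in auto)
  finally show ?thesis .
qed

definition co :: complex where "co = complex_of_real (cos (pi/8))"
definition si :: complex where "si = complex_of_real (sin (pi/8))"

lemma trig8: "co * co + si * si = 1" "co * co - si * si = hr" "2 * si * co = hr"
proof -
  have s2: "sqrt 2 / 2 = 1 / sqrt (2::real)" by (simp add: field_simps)
  have a: "cos (pi/8) * cos (pi/8) + sin (pi/8) * sin (pi/8) = 1" by (simp flip: power2_eq_square)
  have b: "cos (pi/8) * cos (pi/8) - sin (pi/8) * sin (pi/8) = 1 / sqrt 2"
    using cos_double[of "pi/8"] cos_45 s2 by (simp add: power2_eq_square)
  have c: "2 * sin (pi/8) * cos (pi/8) = 1 / sqrt 2"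
    using sin_double[of "pi/8"] sin_45 s2 by simp
  show "co * co + si * si = 1" unfolding co_def si_def by (metis a of_real_add of_real_mult of_real_1)
  show "co * co - si * si = hr" unfolding co_def si_def hr_def by (metis b of_real_diff of_real_mult)
  show "2 * si * co = hr" unfolding co_def si_def hr_def by (metis c of_real_mult of_real_numeral)
qed

lemma app_Ry8:
  assumes "y < 2 * 2^n"
  shows "app (Suc n) (single_gate (Suc n) (Suc n) (Rym (pi/4))) v y =
     (if 2^n \<le> y then si * v (y - 2^n) + co * v y else co * v y - si * v (y + 2^n))"
    "app (Suc n) (single_gate (Suc n) (Suc n) (Rym (-(pi/4)))) v y =
     (if 2^n \<le> y then - si * v (y - 2^n) + co * v y else co * v y + si * v (y + 2^n))"
proof -
  have ym: "y < 2^(Suc n)" using assms by simp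
  have e: "pi / 4 / 2 = pi / 8" by simp
  show "app (Suc n) (single_gate (Suc n) (Suc n) (Rym (pi/4))) v y =
     (if 2^n \<le> y then si * v (y - 2^n) + co * v y else co * v y - si * v (y + 2^n))"
    using app_Ry[of "Suc n" "Suc n" y "pi/4" v] ym topbit[OF assms] unset_top[OF assms] set_top[OF assms]
    by (simp add: e co_def si_def)
  show "app (Suc n) (single_gate (Suc n) (Suc n) (Rym (-(pi/4)))) v y =
     (if 2^n \<le> y then - si * v (y - 2^n) + co * v y else co * v y + si * v (y + 2^n))"
    using app_Ry[of "Suc n" "Suc n" y "-(pi/4)" v] ym topbit[OF assms] unset_top[OF assms] set_top[OF assms]
    by (simp add: e co_def si_def)
qed

definition Ulist :: "nat \<Rightarrow> complex mat list" where
  "Ulist n = [single_gate (Suc n) (Suc n) (Rym (pi/4))] @ Fl n @ [single_gate (Suc n) (Suc n) (Rym (-(pi/4)))] @ Fl n"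

lemma S6:
  assumes y: "y < 2 * 2^n"
  shows "act (Suc n) (Ulist n) v y =
    (if y mod 2^n = 0 then v y else if y < 2^n then hr * (v y - v (y + 2^n)) else hr * (v (y - 2^n) + v y))"
proof -
  let ?N = "(2::nat)^n" and ?m = "Suc n"
  define a where "a = act ?m (Fl n) v"
  define b where "b = app ?m (single_gate ?m ?m (Rym (-(pi/4)))) a"
  define c where "c = act ?m (Fl n) b"
  have az: "a z = v (flf n z)" if "z < 2 * ?N" for z using act_Fl[OF that] by (simp add: a_def)
  have bz: "b z = (if ?N \<le> z then - si * a (z - ?N) + co * a z else co * a z + si * a (z + ?N))"
    if "z < 2 * ?N" for z using app_Ry8(2)[OF that] by (simp add: b_def)
  have cz: "c z = b (flf n z)" if "z < 2 * ?N" for z using act_Fl[OF that] by (simp add: c_def)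
  have out: "act ?m (Ulist n) v y = (if ?N \<le> y then si * c (y - ?N) + co * c y else co * c y - si * c (y + ?N))"
    using app_Ry8(1)[OF y] by (simp add: Ulist_def act_append c_def b_def a_def)
  have N0: "0 < ?N" by simp
  consider "y = 0" | "0 < y" "y < ?N" | "y = ?N" | "?N < y" by linarith
  then show ?thesis
  proof cases
    case 1
    have f: "flf n 0 = 0" "flf n ?N = ?N" by (simp_all add: flf_def)
    have "act ?m (Ulist n) v y = co * (co * v 0 + si * v ?N) - si * (- si * v 0 + co * v ?N)"
      using 1 out cz bz az f by simp
    also have "\<dots> = (co * co + si * si) * v 0" by (simp add: algebra_simps)
    finally show ?thesis using 1 trig8(1) by simp
  next
    case 2
    have ym: "y mod ?N = y" using 2 by simp
    have f: "flf n y = y + ?N" "flf n (y + ?N) = y" using 2 by (simp_all add: flf_def)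
    have l: "y + ?N < 2 * ?N" using 2 by simp
    have "act ?m (Ulist n) v y = co * (- si * v (y + ?N) + co * v y) - si * (co * v (y + ?N) + si * v y)"
      using 2 out cz[OF l] cz[OF y] bz[OF l] bz[OF y] az[OF l] az[OF y] f by simp
    also have "\<dots> = (co * co - si * si) * v y - (2 * si * co) * v (y + ?N)" by (simp add: algebra_simps)
    also have "\<dots> = hr * v y - hr * v (y + ?N)" by (simp only: trig8)
    finally show ?thesis using 2 by (simp add: algebra_simps)
  next
    case 3
    have f: "flf n 0 = 0" "flf n ?N = ?N" by (simp_all add: flf_def)
    have "act ?m (Ulist n) v y = si * (co * v 0 + si * v ?N) + co * (- si * v 0 + co * v ?N)"
      using 3 out cz bz az f by simp
    also have "\<dots> = (co * co + si * si) * v ?N" by (simp add: algebra_simps)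
    finally show ?thesis using 3 trig8(1) by simp
  next
    case 4
    have ym: "y mod ?N \<noteq> 0"
    proof
      assume "y mod ?N = 0"
      moreover have "y mod ?N = y - ?N" using 4 y by (intro dmc(2)[where q=1]) auto
      ultimately show False using 4 by simp
    qed
    have yN: "(y - ?N) mod ?N = y - ?N" using 4 y by simp
    have f: "flf n y = y - ?N" "flf n (y - ?N) = y" using 4 y ym yN by (auto simp: flf_def)
    have l: "y - ?N < 2 * ?N" using y by simp
    have nl: "\<not> ?N \<le> y - ?N" using y by simp
    have "act ?m (Ulist n) v y = si * (- si * v y + co * v (y - ?N)) + co * (co * v y + si * v (y - ?N))"
      using 4 out cz[OF l] cz[OF y] bz[OF l] bz[OF y] az[OF l] az[OF y] f nl by simp
    also have "\<dots> = (co * co - si * si) * v y + (2 * si * co) * v (y - ?N)" by (simp add: algebra_simps)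
    also have "\<dots> = hr * v y + hr * v (y - ?N)" by (simp only: trig8)
    finally show ?thesis using 4 ym by (simp add: algebra_simps)
  qed
qed

lemma S7:
  assumes "y < 2 * 2^n"
  shows "act (Suc n) (shiftC (Suc n) (Suc n) n 1) v y = v (if y < 2^n then y else 2^n + (y - 2^n + 1) mod 2^n)"
proof -
  have ym: "y < 2^(Suc n)" using assms by simp
  show ?thesis
  proof (cases "y < 2^n")
    case True then show ?thesis using act_shiftC[of n "Suc n" "Suc n" y 1 v] ym topbit[OF assms] by simp
  next
    case False
    have d: "y = 1 * 2^n + (y - 2^n)" using False by simp
    have "y div 2^n = 1" "y mod 2^n = y - 2^n" using dmc[OF d] False assms by auto
    then show ?thesis using act_shiftC[of n "Suc n" "Suc n" y 1 v] ym topbit[OF assms] False by simp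
  qed
qed

definition phi :: "nat \<Rightarrow> nat \<Rightarrow> nat \<Rightarrow> real" where
  "phi N l j = real j * (real l + 1/2) * pi / real N"

lemma phi_refl:
  assumes "N > 0" "j \<le> 2 * N"
  shows "cos (phi N l (2 * N - j)) = - cos (phi N l j)" "sin (phi N l (2 * N - j)) = sin (phi N l j)"
proof -
  have e: "phi N l (2 * N - j) = real (2 * l + 1) * pi - phi N l j"
    using assms by (simp add: phi_def of_nat_diff field_simps)
  have c: "cos (real (2 * l + 1) * pi) = -1" using cos_npi[of "2 * l + 1"] by simp
  have s: "sin (real (2 * l + 1) * pi) = 0" by (rule sin_npi)
  show "cos (phi N l (2 * N - j)) = - cos (phi N l j)" unfolding e cos_diff c s by simp
  show "sin (phi N l (2 * N - j)) = sin (phi N l j)" unfolding e sin_diff c s by simp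
qed

lemma phi_N: "N > 0 \<Longrightarrow> cos (phi N l N) = 0"
proof -
  assume N: "N > 0"
  have "phi N l N = real l * pi + pi / 2" using N by (simp add: phi_def field_simps)
  then show ?thesis by (simp add: cos_add)
qed

lemma phi_0: "phi N l 0 = 0" by (simp add: phi_def)

lemma cis_pm: "cis (- p) + cis p = complex_of_real (2 * cos p)" "cis (- p) - cis p = - \<i> * complex_of_real (2 * sin p)"
  by (simp_all add: complex_eq_iff)

lemma gval:
  fixes n l j :: nat and s0 :: complex
  defines "N \<equiv> (2::nat)^n"
  assumes l: "l < N"
  shows "cis (- pi / 2^(Suc n) * real j) * (hr * (Fq (-1) (Suc n) j l + s0 * Fq (-1) (Suc n) j (2 * N - 1 - l)))
    = (cis (- phi N l j) + s0 * cis (phi N l j)) / (2 * complex_of_real (sqrt N))"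
proof -
  have N0: "N > 0" by (simp add: N_def)
  have rN: "real N = 2^n" by (simp add: N_def)
  let ?s = "complex_of_real (sqrt (2^(Suc n)))"
  have A: "cis (- pi / 2^(Suc n) * real j) * cis (-1 * 2 * pi * real j * real l / 2^(Suc n)) = cis (- phi N l j)"
    unfolding cis_mult by (rule arg_cong[where f=cis]) (simp add: phi_def rN field_simps)
  have B: "cis (- pi / 2^(Suc n) * real j) * cis (-1 * 2 * pi * real j * real (2 * N - 1 - l) / 2^(Suc n)) = cis (phi N l j)"
  proof -
    have r: "real (2 * N - 1 - l) = 2 * real N - 1 - real l" using l by (simp add: of_nat_diff)
    have e: "- pi / 2^(Suc n) * real j + -1 * 2 * pi * real j * real (2 * N - 1 - l) / 2^(Suc n) =
        phi N l j + 2 * pi * (- real j)"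
      unfolding r by (simp add: phi_def rN field_simps)
    have o: "cis (2 * pi * (- real j)) = 1" by (rule cis_multiple_2pi) simp
    show ?thesis unfolding cis_mult e cis_mult[symmetric] o by simp
  qed
  have s: "hr / ?s = 1 / (2 * complex_of_real (sqrt N))"
  proof -
    have "sqrt (2::real) * sqrt (2^(Suc n)) = 2 * sqrt N"
      by (simp add: N_def real_sqrt_mult[symmetric] flip: power_Suc) (simp add: real_sqrt_mult power2_eq_square[symmetric])
    then have "complex_of_real (sqrt 2) * ?s = 2 * complex_of_real (sqrt N)"
      by (metis of_real_mult of_real_numeral)
    then show ?thesis unfolding hr_eq by (simp add: field_simps)
  qed
  have "cis (- pi / 2^(Suc n) * real j) * (hr * (Fq (-1) (Suc n) j l + s0 * Fq (-1) (Suc n) j (2 * N - 1 - l)))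
      = (hr / ?s) * (cis (- pi / 2^(Suc n) * real j) * cis (-1 * 2 * pi * real j * real l / 2^(Suc n)) +
          s0 * (cis (- pi / 2^(Suc n) * real j) * cis (-1 * 2 * pi * real j * real (2 * N - 1 - l) / 2^(Suc n))))"
    unfolding Fq_def by (simp add: field_simps)
  also have "\<dots> = (cis (- phi N l j) + s0 * cis (phi N l j)) / (2 * complex_of_real (sqrt N))"
    unfolding A B s by simp
  finally show ?thesis .
qed

definition circ :: "nat \<Rightarrow> complex mat list" where
  "circ n = shiftC (Suc n) (Suc n) n 1 @ Ulist n @ (shiftC (Suc n) (Suc n) n (2^n - 1) @ cxl (Suc n) (Suc n) n)
     @ pl (Suc n) (- pi / 2^(Suc n)) (Suc n) @ qft (Suc n) (-1) (Suc n) @ (cxl (Suc n) (Suc n) n @ [single_gate (Suc n) (Suc n) Hm])"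

lemma sum_delta2:
  assumes "p1 < (M::nat)" "p2 < M" "p1 \<noteq> p2"
  shows "(\<Sum>z<M. f z * (hr * ((if z = p1 then 1 else 0) + s0 * (if z = p2 then 1 else 0)))) = hr * (f p1 + s0 * f p2)"
proof -
  have "(\<Sum>z<M. f z * (hr * ((if z = p1 then 1 else 0) + s0 * (if z = p2 then 1 else 0)))) =
        (\<Sum>z<M. (if z = p1 then hr * f z else 0)) + (\<Sum>z<M. (if z = p2 then hr * s0 * f z else 0))"
    by (subst sum.distrib[symmetric]) (rule sum.cong, auto simp: algebra_simps)
  also have "\<dots> = hr * f p1 + hr * s0 * f p2"
  proof -
    have a: "(\<Sum>z<M. if z = p1 then hr * f z else 0) = hr * f p1" using assms(1) by simp
    have b: "(\<Sum>z<M. if z = p2 then hr * s0 * f z else 0) = hr * s0 * f p2" using assms(2) by simp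
    show ?thesis unfolding a b ..
  qed
  also have "\<dots> = hr * (f p1 + s0 * f p2)" by (simp add: algebra_simps)
  finally show ?thesis .
qed

lemma real_id1: "N > 0 \<Longrightarrow> sqrt (2 / real N) * (1 / sqrt 2) = 1 / sqrt (real N)"
  by (simp add: real_sqrt_divide)
lemma real_id2: "N > 0 \<Longrightarrow> (1 / sqrt 2) * (2 * c / sqrt (real N)) = sqrt (2 / real N) * c"
proof -
  have e: "2 / sqrt 2 = sqrt (2::real)" by (simp add: field_simps)
  have "(1 / sqrt 2) * (2 * c / sqrt (real N)) = (2 / sqrt 2) * c / sqrt N" by simp
  also have "\<dots> = sqrt 2 * c / sqrt N" by (simp only: e)
  also have "\<dots> = sqrt (2 / real N) * c" by (simp add: real_sqrt_divide)
  finally show ?thesis .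
qed

lemma hr_of_real: "hr * complex_of_real a = complex_of_real (1 / sqrt 2 * a)" by (simp add: hr_def)

lemma main_entry:
  fixes n x y :: nat
  defines "N \<equiv> (2::nat)^n"
  assumes x: "x < 2 * N" and y: "y < 2 * N"
  shows "act (Suc n) (circ n) (\<lambda>z. if z = x then 1 else 0) y = CS_block N $$ (y, x)"
proof -
  let ?m = "Suc n"
  define e where "e = (\<lambda>z. if z = x then 1 else (0::complex))"
  define l where "l = (if x < N then x else x - N)"
  define s0 where "s0 = (if x < N then 1 else (-1::complex))"
  have N0: "N > 0" by (simp add: N_def)
  have lN: "l < N" using x by (auto simp: l_def)
  have mN: "(2::nat)^?m = 2 * N" by (simp add: N_def)
  define V where "V = cxl ?m ?m n @ [single_gate ?m ?m Hm]"
  define w1 where "w1 = act ?m V e"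
  have W1: "w1 z = hr * ((if z = l then 1 else 0) + s0 * (if z = 2 * N - 1 - l then 1 else 0))" if z: "z < 2 * N" for z
  proof -
    have "w1 z = hr * (if z < N then e z + e (z + N) else e (2 * N - 1 - z) - e (3 * N - 1 - z))"
      using S12[of z n e] z by (simp add: w1_def V_def N_def)
    moreover have "hr * (if z < N then e z + e (z + N) else e (2 * N - 1 - z) - e (3 * N - 1 - z)) =
      hr * ((if z = l then 1 else 0) + s0 * (if z = 2 * N - 1 - l then 1 else 0))"
    proof (cases "z < N")
      case zT: True
      show ?thesis
      proof (cases "x < N")
        case True
        have "z + N \<noteq> x" "z \<noteq> 2 * N - 1 - x" using zT True by arith+
        then show ?thesis using zT True by (simp add: e_def l_def s0_def)
      next
        case False
        have "z \<noteq> x" "(z + N = x) = (z = x - N)" "z \<noteq> 2 * N - 1 - (x - N)" using zT False x by arith+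
        then show ?thesis using zT False by (simp add: e_def l_def s0_def)
      qed
    next
      case zF: False
      show ?thesis
      proof (cases "x < N")
        case True
        have "3 * N - 1 - z \<noteq> x" "(2 * N - 1 - z = x) = (z = 2 * N - 1 - x)" "z \<noteq> x" using zF True z by arith+
        then show ?thesis using zF True by (simp add: e_def l_def s0_def)
      next
        case False
        have "2 * N - 1 - z \<noteq> x" "(3 * N - 1 - z = x) = (z = 2 * N - 1 - (x - N))" "z \<noteq> x - N" using zF False z x by arith+
        then show ?thesis using zF False by (simp add: e_def l_def s0_def)
      qed
    qed
    ultimately show ?thesis by simp
  qed
  define Gf where "Gf = (\<lambda>j. (cis (- phi N l j) + s0 * cis (phi N l j)) / (2 * complex_of_real (sqrt N)))"
  define g where "g = act ?m (pl ?m (- pi / 2^?m) ?m) (act ?m (qft ?m (-1) ?m) w1)"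
  have G: "g j = Gf j" if j: "j < 2 * N" for j
  proof -
    have jm: "j < 2^?m" using j mN by simp
    have "act ?m (qft ?m (-1) ?m) w1 j = (\<Sum>z<2 * N. Fq (-1) ?m j z * w1 z)"
      using S3[OF jm] mN by simp
    also have "\<dots> = (\<Sum>z<2 * N. Fq (-1) ?m j z * (hr * ((if z = l then 1 else 0) + s0 * (if z = 2 * N - 1 - l then 1 else 0))))"
      using W1 by (intro sum.cong refl) simp
    also have "\<dots> = hr * (Fq (-1) ?m j l + s0 * Fq (-1) ?m j (2 * N - 1 - l))"
      using lN by (intro sum_delta2) auto
    finally have "act ?m (qft ?m (-1) ?m) w1 j = hr * (Fq (-1) ?m j l + s0 * Fq (-1) ?m j (2 * N - 1 - l))" .
    then have Q: "act ?m (qft ?m (-1) ?m) w1 j = hr * (Fq (-1) ?m j l + s0 * Fq (-1) ?m j (2 * N - 1 - l))" .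
    have "g j = cis (- pi / 2^?m * real j) * (hr * (Fq (-1) ?m j l + s0 * Fq (-1) ?m j (2 * N - 1 - l)))"
      unfolding g_def S4[OF jm] Q ..
    also have "\<dots> = Gf j" unfolding Gf_def using gval[of l n j s0] lN by (simp add: N_def)
    finally show ?thesis .
  qed
  define Gc where "Gc = (\<lambda>j. if x < N then complex_of_real (cos (phi N l j) / sqrt N)
                             else - \<i> * complex_of_real (sin (phi N l j) / sqrt N))"
  have GG: "Gf j = Gc j" for j
  proof (cases "x < N")
    case True
    then show ?thesis unfolding Gf_def Gc_def s0_def using cis_pm(1)[of "phi N l j"]
      by (simp add: field_simps)
  next
    case False
    then have "Gf j = (cis (- phi N l j) - cis (phi N l j)) / (2 * complex_of_real (sqrt N))"
      unfolding Gf_def s0_def by simp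
    then show ?thesis unfolding Gc_def using False cis_pm(2)[of "phi N l j"] by (simp add: field_simps)
  qed
  define h where "h = act ?m (shiftC ?m ?m n (N - 1) @ cxl ?m ?m n) g"
  have Hz: "h z = Gc (if z < N then z else if z = N then N else 3 * N - z)" if z: "z < 2 * N" for z
  proof -
    have "h z = g (if z < N then z else if z = N then N else 3 * N - z)"
      using S5[of z n g] z by (simp add: h_def N_def)
    moreover have "(if z < N then z else if z = N then N else 3 * N - z) < 2 * N" using z by auto
    ultimately show ?thesis using G GG by simp
  qed
  define u where "u = act ?m (Ulist n) h"
  have Uz: "u z = (if z mod N = 0 then h z else if z < N then hr * (h z - h (z + N)) else hr * (h (z - N) + h z))"
    if z: "z < 2 * N" for z using S6[of z n h] z by (simp add: u_def N_def)
  have out: "act ?m (circ n) e y = u (if y < N then y else N + (y - N + 1) mod N)"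
  proof -
    have "act ?m (circ n) e = act ?m (shiftC ?m ?m n 1) u"
      by (simp add: circ_def act_append u_def h_def g_def w1_def V_def N_def)
    then show ?thesis using S7[of y n u] y by (simp add: N_def)
  qed
  have T: "CS_block N $$ (y, x) = (if y < N then (if x < N then DCT2 N $$ (y, x) else 0)
        else (if x < N then 0 else - \<i> * DST2 N $$ (y - N, x - N)))"
    using x y by (simp add: CS_block_def DCT2_def DST2_def)
  have DC: "DCT2 N $$ (y, x) = complex_of_real (sqrt (2 / real N) * (if y = 0 then 1 / sqrt 2 else 1) * cos (phi N l y))"
    if "y < N" "x < N" using that by (simp add: DCT2_def phi_def l_def)
  have DS: "DST2 N $$ (y - N, x - N) = complex_of_real (sqrt (2 / real N) * (if y - N + 1 = N then 1 / sqrt 2 else 1) * sin (phi N l (y - N + 1)))"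
    if "N \<le> y" "N \<le> x" using that x y by (simp add: DST2_def phi_def l_def)
  consider "y = 0" | "0 < y" "y < N" | "N \<le> y" "y < 2 * N - 1" | "y = 2 * N - 1" using y by linarith
  then show ?thesis
  proof cases
    case 1
    have o: "act ?m (circ n) e y = Gc 0" using 1 out Uz Hz N0 by simp
    show ?thesis
    proof (cases "x < N")
      case True
      then show ?thesis unfolding e_def[symmetric] o T using 1 N0 DC[OF _ True]
        by (simp add: Gc_def phi_0 real_sqrt_divide field_simps)
    next
      case False
      then show ?thesis unfolding e_def[symmetric] o T using 1 N0 by (simp add: Gc_def phi_0)
    qed
  next
    case 2
    have l2: "y + N < 2 * N" using 2 by simp
    have o: "act ?m (circ n) e y = hr * (Gc y - Gc (2 * N - y))"
    proof -
      have "act ?m (circ n) e y = hr * (h y - h (y + N))" using 2 out Uz[OF y] by simp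
      moreover have "h y = Gc y" using Hz[OF y] 2 by simp
      moreover have "h (y + N) = Gc (2 * N - y)" using Hz[OF l2] 2 by simp
      ultimately show ?thesis by simp
    qed
    have c: "cos (phi N l (2 * N - y)) = - cos (phi N l y)" "sin (phi N l (2 * N - y)) = sin (phi N l y)"
      using phi_refl[OF N0, of y l] 2 by auto
    show ?thesis
    proof (cases "x < N")
      case True
      have "hr * (Gc y - Gc (2 * N - y)) = hr * complex_of_real (2 * cos (phi N l y) / sqrt N)"
        using True c by (simp add: Gc_def diff_divide_distrib[symmetric] flip: of_real_diff)
      also have "\<dots> = complex_of_real (sqrt (2 / real N) * cos (phi N l y))"
        unfolding hr_of_real real_id2[OF N0] ..
      finally show ?thesis unfolding e_def[symmetric] o T using 2 True DC[OF 2(2) True] by simp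
    next
      case False
      then show ?thesis unfolding e_def[symmetric] o T using 2 c by (simp add: Gc_def)
    qed
  next
    case 3
    define j where "j = y + 1 - N"
    have j: "0 < j" "j < N" "y - N + 1 = j" using 3 by (auto simp: j_def)
    have l1: "y + 1 < 2 * N" using 3 by simp
    have o: "act ?m (circ n) e y = hr * (Gc j + Gc (2 * N - j))"
    proof -
      have s7: "(if y < N then y else N + (y - N + 1) mod N) = y + 1" using 3 j by simp
      have m1: "(y + 1) mod N = j"
      proof -
        have "y + 1 = 1 * N + j" using 3 by (simp add: j_def)
        then show ?thesis using dmc(2) j(2) by blast
      qed
      have "act ?m (circ n) e y = hr * (h (y + 1 - N) + h (y + 1))" using out Uz[OF l1] s7 m1 j 3 by simp
      moreover have "h (y + 1 - N) = Gc j" using Hz[of "y + 1 - N"] j by (simp add: j_def)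
      moreover have "h (y + 1) = Gc (2 * N - j)" using Hz[OF l1] 3 by (simp add: j_def)
      ultimately show ?thesis by (simp add: j_def)
    qed
    have c: "cos (phi N l (2 * N - j)) = - cos (phi N l j)" "sin (phi N l (2 * N - j)) = sin (phi N l j)"
      using phi_refl[OF N0, of j l] j by auto
    show ?thesis
    proof (cases "x < N")
      case True
      then show ?thesis unfolding e_def[symmetric] o T using 3 c by (simp add: Gc_def)
    next
      case False
      have "hr * (Gc j + Gc (2 * N - j)) = - \<i> * (hr * complex_of_real (2 * sin (phi N l j) / sqrt N))"
        using False c by (simp add: Gc_def algebra_simps add_divide_distrib[symmetric] flip: of_real_add)
      also have "\<dots> = - \<i> * complex_of_real (sqrt (2 / real N) * sin (phi N l j))"
        unfolding hr_of_real real_id2[OF N0] ..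
      finally show ?thesis unfolding e_def[symmetric] o T using 3 False DS[OF 3(1)] j by simp
    qed
  next
    case 4
    have o: "act ?m (circ n) e y = Gc N"
    proof -
      have s7: "(if y < N then y else N + (y - N + 1) mod N) = N" using 4 N0 by simp
      have "act ?m (circ n) e y = h N" using out Uz[of N] s7 N0 by simp
      then show ?thesis using Hz[of N] N0 by simp
    qed
    show ?thesis
    proof (cases "x < N")
      case True
      then show ?thesis unfolding e_def[symmetric] o T using 4 N0 phi_N[OF N0] by (simp add: Gc_def)
    next
      case False
      have yN: "y - N + 1 = N" using 4 N0 by simp
      have nl: "\<not> (2 * N - 1 < N)" "N \<le> y" "N \<le> x" using N0 4 False by simp_all
      show ?thesis unfolding e_def[symmetric] o T using 4 N0 False DS[OF nl(2,3)] yN x nl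
        by (simp add: Gc_def real_sqrt_divide field_simps)
    qed
  qed
qed

lemma elem_carrier: "elementary_gate m G \<Longrightarrow> G \<in> carrier_mat (2^m) (2^m)"
  unfolding elementary_gate_def single_gate_def cnot_gate_def by auto

lemma all_Fl: "\<forall>G\<in>set (Fl n). elementary_gate (Suc n) G"
  using all_shiftU[of "Suc n" "Suc n"] all_shiftU[of n "Suc n"] all_xl[of "Suc n" "Suc n"] all_xl[of n "Suc n"]
  by (auto simp: Fl_def)

lemma all_circ: "\<forall>G\<in>set (circ n). elementary_gate (Suc n) G"
proof -
  have r: "elementary_gate (Suc n) (single_gate (Suc n) (Suc n) (Rym th))" for th
    by (rule elem_single) (auto simp: unitary_Rym)
  have h: "elementary_gate (Suc n) (single_gate (Suc n) (Suc n) Hm)"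
    by (rule elem_single) (auto simp: unitary_Hm)
  have u: "\<forall>G\<in>set (Ulist n). elementary_gate (Suc n) G"
    using all_Fl[of n] r by (auto simp: Ulist_def)
  have f1: "\<forall>G\<in>set (shiftC (Suc n) (Suc n) n s). elementary_gate (Suc n) G" for s
    using all_shiftC[of n "Suc n" "Suc n"] by simp
  have f2: "\<forall>G\<in>set (cxl (Suc n) (Suc n) n). elementary_gate (Suc n) G"
    using all_cxl[of n "Suc n" "Suc n"] by simp
  have f3: "\<forall>G\<in>set (pl (Suc n) al (Suc n)). elementary_gate (Suc n) G" for al
    by (rule all_pl[OF le_refl])
  have f4: "\<forall>G\<in>set (qft (Suc n) sg (Suc n)). elementary_gate (Suc n) G" for sg
    by (rule all_qft[OF le_refl])
  have f5: "\<forall>G\<in>set [single_gate (Suc n) (Suc n) Hm]. elementary_gate (Suc n) G" using h by simp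
  show ?thesis unfolding circ_def set_append ball_Un
    by (intro conjI f1 f2 f3 f4 f5 u)
qed

lemma length_circ: "length (circ n) \<le> 66 * n * n + 51 * n + 28"
proof -
  let ?m = "Suc n"
  have a: "length (shiftC ?m ?m n s) \<le> 13 * n * n" for s by (rule length_shiftC)
  have b: "length (shiftU ?m ?m s) \<le> 9 * ?m * ?m" for s by (rule length_shiftU)
  have c: "length (shiftU ?m n s) \<le> 9 * n * n" for s by (rule length_shiftU)
  have d: "length (qft ?m (-1) ?m) \<le> 4 * ?m * ?m" by (rule length_qft)
  have fl: "length (Fl n) \<le> 9 * ?m * ?m + ?m + 9 * n * n + n"
    unfolding Fl_def using b[of "2 * 2^n - 1"] c[of "2^n - 1"] by simp
  have ul: "length (Ulist n) \<le> 2 + 2 * (9 * ?m * ?m + ?m + 9 * n * n + n)"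
    unfolding Ulist_def using fl by simp
  have "length (circ n) \<le> 13 * n * n + (2 + 2 * (9 * ?m * ?m + ?m + 9 * n * n + n)) + 13 * n * n + n
      + ?m + 4 * ?m * ?m + n + 1"
    unfolding circ_def using a[of 1] a[of "2^n - 1"] ul d by simp
  also have "\<dots> = 66 * n * n + 51 * n + 28" by (simp add: algebra_simps)
  finally show ?thesis .
qed

theorem mainTheorem3:
  shows "\<exists>c::real. c > 0 \<and> (\<exists>K::nat. \<forall>n::nat. n \<ge> 1 \<longrightarrow>
           (\<exists>k \<le> K. \<exists>gs. real (length gs) \<le> c * real n ^ 2 \<and>
              realizes (n + 1) k gs (CS_block (2 ^ n))))"
proof -
  have main: "\<forall>n::nat. n \<ge> 1 \<longrightarrow> (\<exists>k \<le> (0::nat). \<exists>gs. real (length gs) \<le> 200 * real n ^ 2 \<and>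
              realizes (n + 1) k gs (CS_block (2 ^ n)))"
  proof (intro allI impI)
    fix n :: nat assume n1: "n \<ge> 1"
    have len: "real (length (circ n)) \<le> 200 * real n ^ 2"
    proof -
      have "length (circ n) \<le> 66 * n * n + 51 * n + 28" by (rule length_circ)
      also have "\<dots> \<le> 66 * n * n + 51 * (n * n) + 28 * (n * n)"
        using n1 by (intro add_mono mult_left_mono) (auto simp: le_square)
      also have "\<dots> \<le> 200 * (n * n)" by simp
      finally have "real (length (circ n)) \<le> 200 * (real n * real n)"
        by (metis of_nat_le_iff of_nat_mult of_nat_numeral)
      then show ?thesis by (simp add: power2_eq_square)
    qed
    have el: "\<forall>G\<in>set (circ n). elementary_gate (n + 1 + 0) G" using all_circ[of n] by simp
    have car: "\<forall>G\<in>set (circ n). G \<in> carrier_mat (2^(Suc n)) (2^(Suc n))" using all_circ[of n] elem_carrier by blast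
    have re: "realizes (n + 1) 0 (circ n) (CS_block (2 ^ n))"
      unfolding realizes_def
    proof (intro conjI el allI impI)
      fix x y :: nat assume x: "x < 2 ^ (n + 1)" and y: "y < 2 ^ (n + 1 + 0)"
      have x': "x < 2 * 2^n" "x < 2^(Suc n)" using x by simp_all
      have y': "y < 2 * 2^n" "y < 2^(Suc n)" using y by simp_all
      have "circuit_mat (n + 1 + 0) (circ n) $$ (y, x * 2 ^ 0) = circuit_mat (Suc n) (circ n) $$ (y, x)" by simp
      also have "\<dots> = act (Suc n) (circ n) (\<lambda>z. if z = x then 1 else 0) y"
        by (rule circuit_entry[OF car y'(2) x'(2)])
      also have "\<dots> = CS_block (2^n) $$ (y, x)" by (rule main_entry[OF x'(1) y'(1)])
      finally show "circuit_mat (n + 1 + 0) (circ n) $$ (y, x * 2 ^ 0) =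
          (if y mod 2 ^ 0 = 0 then CS_block (2 ^ n) $$ (y div 2 ^ 0, x) else 0)" by simp
    qed
    show "\<exists>k \<le> (0::nat). \<exists>gs. real (length gs) \<le> 200 * real n ^ 2 \<and> realizes (n + 1) k gs (CS_block (2 ^ n))"
      using len re by blast
  qed
  show ?thesis
    by (rule exI[of _ 200], rule conjI, simp, rule exI[of _ 0], rule main)
qed

end
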